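(* Let $M\in\mathbb R^{\mathbb N\times\mathbb N}$ be bounded on $\ell_2$ and elliptic (there is $C_{\rm ell}>0$ with $Mx\cdot x\ge C_{\rm ell}\|x\|_{\ell_2}^2$ for all $x$). Let $n_1=1<n_2<\cdots$ be a block structure and let $M$ be block-banded: $M(i,j)=0$ for $|i-j|>b_0$, some $b_0\in\mathbb N$. Then the block-$LU$-factorization $M=LU$ with $L$ block-lower triangular, $U$ block-upper triangular and $L(i,i)=I$ for all $i$ exists, $L$ and $U$ are block-banded with bandwidth $b_0$, and \[\|L\|_2+\|U\|_2+\|L^{-1}\|_2+\|U^{-1}\|_2<\infty.\] Moreover, the block-diagonal matrix $D$ with $D(i,i):=U(i,i)$ is bounded and elliptic, with bounded and elliptic inverse.
   Context: $\|\cdot\|_2$ is the operator norm on $\ell_2$. Block notation: $M(i,j)=M|_{\{n_i,\dots,n_{i+1}-1\}\times\{n_j,\dots,n_{j+1}-1\}}$. Block-lower (upper) triangular means $M(i,j)=0$ for $i<j$ ($i>j$); block-banded with bandwidth $b$ means $M(i,j)=0$ for $|i-j|>b$. *)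

theory Defs
  imports Complex_Main
begin

text \<open>Infinite real matrices are functions nat => nat => real (0-based indices);
  vectors are functions nat => real.\<close>

type_synonym imat = "nat \<Rightarrow> nat \<Rightarrow> real"
type_synonym ivec = "nat \<Rightarrow> real"

definition in_l2 :: "ivec \<Rightarrow> bool" where
  "in_l2 x \<longleftrightarrow> summable (\<lambda>i. (x i)^2)"

definition l2norm :: "ivec \<Rightarrow> real" where
  "l2norm x = sqrt (\<Sum>i. (x i)^2)"

definition l2inner :: "ivec \<Rightarrow> ivec \<Rightarrow> real" where
  "l2inner x y = (\<Sum>i. x i * y i)"

definition mv :: "imat \<Rightarrow> ivec \<Rightarrow> ivec" where
  "mv M x = (\<lambda>i. \<Sum>j. M i j * x j)"

definition mmul :: "imat \<Rightarrow> imat \<Rightarrow> imat" where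
  "mmul A B = (\<lambda>i j. \<Sum>k. A i k * B k j)"

definition bounded_l2 :: "imat \<Rightarrow> bool" where
  "bounded_l2 M \<longleftrightarrow> (\<exists>C. \<forall>x. in_l2 x \<longrightarrow>
      (\<forall>i. summable (\<lambda>j. M i j * x j)) \<and> in_l2 (mv M x) \<and> l2norm (mv M x) \<le> C * l2norm x)"

definition elliptic_l2 :: "imat \<Rightarrow> bool" where
  "elliptic_l2 M \<longleftrightarrow> (\<exists>c>0. \<forall>x. in_l2 x \<longrightarrow> l2inner (mv M x) x \<ge> c * (l2norm x)^2)"

definition l2_inverse :: "imat \<Rightarrow> imat \<Rightarrow> bool" where
  "l2_inverse A B \<longleftrightarrow> (\<forall>x. in_l2 x \<longrightarrow> mv A (mv B x) = x \<and> mv B (mv A x) = x)"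

text \<open>Block structure: nb :: nat => nat strictly increasing, nb 0 = 0
  (0-based version of n_1 = 1 < n_2 < ...). Block i is {nb i ..< nb (Suc i)}.\<close>
definition block_structure :: "(nat \<Rightarrow> nat) \<Rightarrow> bool" where
  "block_structure nb \<longleftrightarrow> nb 0 = 0 \<and> strict_mono nb"

definition blk :: "(nat \<Rightarrow> nat) \<Rightarrow> nat \<Rightarrow> nat set" where
  "blk nb i = {nb i ..< nb (Suc i)}"

definition block_zero :: "(nat \<Rightarrow> nat) \<Rightarrow> imat \<Rightarrow> nat \<Rightarrow> nat \<Rightarrow> bool" where
  "block_zero nb M i j \<longleftrightarrow> (\<forall>r\<in>blk nb i. \<forall>c\<in>blk nb j. M r c = 0)"

definition block_lower :: "(nat \<Rightarrow> nat) \<Rightarrow> imat \<Rightarrow> bool" where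
  "block_lower nb M \<longleftrightarrow> (\<forall>i j. i < j \<longrightarrow> block_zero nb M i j)"

definition block_upper :: "(nat \<Rightarrow> nat) \<Rightarrow> imat \<Rightarrow> bool" where
  "block_upper nb M \<longleftrightarrow> (\<forall>i j. i > j \<longrightarrow> block_zero nb M i j)"

definition block_banded :: "(nat \<Rightarrow> nat) \<Rightarrow> nat \<Rightarrow> imat \<Rightarrow> bool" where
  "block_banded nb b M \<longleftrightarrow> (\<forall>i j. (i > j + b \<or> j > i + b) \<longrightarrow> block_zero nb M i j)"

definition unit_block_diag :: "(nat \<Rightarrow> nat) \<Rightarrow> imat \<Rightarrow> bool" where
  "unit_block_diag nb M \<longleftrightarrow>
     (\<forall>i. \<forall>r\<in>blk nb i. \<forall>c\<in>blk nb i. M r c = (if r = c then 1 else 0))"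

definition block_diag_part :: "(nat \<Rightarrow> nat) \<Rightarrow> imat \<Rightarrow> imat" where
  "block_diag_part nb U = (\<lambda>r c. if (\<exists>i. r \<in> blk nb i \<and> c \<in> blk nb i) then U r c else 0)"

end

theory Submission
  imports Defs "Jordan_Normal_Form.Determinant"
begin

lemma cs_sum:
  fixes a b :: "'a \<Rightarrow> real"
  shows "(\<Sum>i\<in>I. a i * b i)^2 \<le> (\<Sum>i\<in>I. (a i)^2) * (\<Sum>i\<in>I. (b i)^2)"
proof -
  define A where "A = (\<Sum>i\<in>I. (a i)^2)"
  define B where "B = (\<Sum>i\<in>I. (b i)^2)"
  define C where "C = (\<Sum>i\<in>I. a i * b i)"
  have key: "0 \<le> A * t^2 - 2 * C * t + B" for t
  proof -
    have "0 \<le> (\<Sum>i\<in>I. (a i * t - b i)^2)" by (intro sum_nonneg) auto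
    also have "\<dots> = A * t^2 - 2 * C * t + B"
      unfolding A_def B_def C_def
      by (simp add: power2_diff sum.distrib sum_subtractf sum_distrib_left sum_distrib_right
           power_mult_distrib algebra_simps)
    finally show ?thesis .
  qed
  have A0: "0 \<le> A" unfolding A_def by (intro sum_nonneg) auto
  show ?thesis
  proof (cases "A = 0")
    case True
    have "0 \<le> - 2 * C * t + B" for t using key[of t] True by simp
    note h = this
    have "C = 0"
    proof (rule ccontr)
      assume "C \<noteq> 0"
      have "0 \<le> - 2 * C * ((B+1)/(2*C)) + B" by (rule h)
      also have "\<dots> = -1" using \<open>C \<noteq> 0\<close> by (simp add: field_simps)
      finally show False by simp
    qed
    thus ?thesis using True unfolding A_def B_def C_def by simp
  next
    case False
    with A0 have Ap: "A > 0" by simp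
    have "0 \<le> A * (C/A)^2 - 2 * C * (C/A) + B" by (rule key)
    also have "\<dots> = B - C^2 / A" using Ap by (simp add: field_simps power2_eq_square)
    finally have "C^2 / A \<le> B" by simp
    hence "C^2 \<le> B * A" using Ap by (simp add: field_simps)
    thus ?thesis unfolding A_def B_def C_def by (simp add: mult.commute)
  qed
qed

lemma abs_prod_le: "\<bar>(a::real) * b\<bar> \<le> (a^2 + b^2) / 2"
proof -
  have "0 \<le> (\<bar>a\<bar> - \<bar>b\<bar>)^2" by simp
  thus ?thesis by (simp add: power2_diff abs_mult power2_abs)
qed

lemma summable_prod_l2:
  assumes "summable (\<lambda>j. (a j)^2)" "summable (\<lambda>j. (x j)^2)"
  shows "summable (\<lambda>j. (a j::real) * x j)"
proof (rule summable_comparison_test')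
  show "summable (\<lambda>j. ((a j)^2 + (x j)^2) / 2)"
    using assms by (intro summable_divide summable_add)
  show "norm (a j * x j) \<le> ((a j)^2 + (x j)^2) / 2" for j
    using abs_prod_le by simp
qed

definition fbS :: "imat \<Rightarrow> real \<Rightarrow> bool" where
  "fbS A K \<longleftrightarrow> (\<forall>R T x. finite R \<longrightarrow> finite T \<longrightarrow>
      (\<Sum>i\<in>R. (\<Sum>j\<in>T. A i j * x j)^2) \<le> K^2 * (\<Sum>j\<in>T. (x j)^2))"

lemma fbSD: "fbS A K \<Longrightarrow> finite R \<Longrightarrow> finite T \<Longrightarrow>
      (\<Sum>i\<in>R. (\<Sum>j\<in>T. A i j * x j)^2) \<le> K^2 * (\<Sum>j\<in>T. (x j)^2)"
  unfolding fbS_def by blast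

lemma fbS_mono: "fbS A K \<Longrightarrow> K^2 \<le> K'^2 \<Longrightarrow> fbS A K'"
  unfolding fbS_def
  by (meson mult_right_mono order_trans sum_nonneg zero_le_power2)

lemma l2norm_sq: "in_l2 x \<Longrightarrow> (l2norm x)^2 = (\<Sum>i. (x i)^2)"
  unfolding l2norm_def in_l2_def
  by (simp add: suminf_nonneg)

lemma fbS_bounded:
  assumes fb: "fbS A K"
  shows "bounded_l2 A"
  unfolding bounded_l2_def
proof (intro exI[of _ "\<bar>K\<bar>"] allI impI conjI)
  fix x assume xl: "in_l2 x"
  hence xs: "summable (\<lambda>j. (x j)^2)" unfolding in_l2_def .
  define S where "S = (\<Sum>j. (x j)^2)"
  have rowb: "(\<Sum>j<n. (A i j)^2) \<le> K^2" for i n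
  proof -
    define s where "s = (\<Sum>j<n. (A i j)^2)"
    have "(\<Sum>i'\<in>{i}. (\<Sum>j\<in>{..<n}. A i' j * A i j)^2) \<le> K^2 * (\<Sum>j\<in>{..<n}. (A i j)^2)"
      by (rule fbSD[OF fb]) auto
    hence "s^2 \<le> K^2 * s" unfolding s_def by (simp add: power2_eq_square)
    moreover have "0 \<le> s" unfolding s_def by (intro sum_nonneg) auto
    ultimately show ?thesis unfolding s_def[symmetric]
      by (cases "s = 0") (auto simp: power2_eq_square)
  qed
  have rows: "summable (\<lambda>j. (A i j)^2)" for i
    by (rule summableI_nonneg_bounded[where x="K^2"]) (use rowb in auto)
  show sm: "summable (\<lambda>j. A i j * x j)" for i
    by (rule summable_prod_l2[OF rows xs])
  define y where "y = mv A x"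
  have lim: "(\<lambda>n. \<Sum>j<n. A i j * x j) \<longlonglongrightarrow> y i" for i
    unfolding y_def mv_def using summable_LIMSEQ[OF sm[of i]] by simp
  have part: "(\<Sum>i\<in>R. (y i)^2) \<le> K^2 * S" if "finite R" for R
  proof (rule LIMSEQ_le_const2)
    show "(\<lambda>n. \<Sum>i\<in>R. (\<Sum>j<n. A i j * x j)^2) \<longlonglongrightarrow> (\<Sum>i\<in>R. (y i)^2)"
      by (intro tendsto_sum tendsto_power lim)
    show "\<exists>N. \<forall>n\<ge>N. (\<Sum>i\<in>R. (\<Sum>j<n. A i j * x j)^2) \<le> K^2 * S"
    proof (intro exI allI impI)
      fix n
      have "(\<Sum>i\<in>R. (\<Sum>j<n. A i j * x j)^2) \<le> K^2 * (\<Sum>j<n. (x j)^2)"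
        using fbSD[OF fb that, of "{..<n}" x] by simp
      also have "\<dots> \<le> K^2 * S" unfolding S_def
        by (intro mult_left_mono sum_le_suminf xs) auto
      finally show "(\<Sum>i\<in>R. (\<Sum>j<n. A i j * x j)^2) \<le> K^2 * S" .
    qed
  qed
  have ys: "summable (\<lambda>i. (y i)^2)"
    by (rule summableI_nonneg_bounded[where x="K^2 * S"]) (use part in auto)
  thus "in_l2 (mv A x)" unfolding in_l2_def y_def .
  have "(\<Sum>i. (y i)^2) \<le> K^2 * S"
    by (rule suminf_le_const[OF ys]) (use part in auto)
  hence "sqrt (\<Sum>i. (y i)^2) \<le> sqrt (K^2 * S)" by simp
  also have "\<dots> = \<bar>K\<bar> * sqrt S" by (simp add: real_sqrt_mult)
  finally show "l2norm (mv A x) \<le> \<bar>K\<bar> * l2norm x"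
    unfolding l2norm_def y_def S_def .
qed

lemma mv_fin:
  assumes "finite T" "\<And>j. j \<notin> T \<Longrightarrow> x j = 0"
  shows "mv A x i = (\<Sum>j\<in>T. A i j * x j)"
  unfolding mv_def by (rule suminf_finite) (use assms in auto)

lemma bounded_fbS:
  assumes "bounded_l2 A"
  shows "\<exists>K. fbS A K"
proof -
  from assms obtain C where C: "\<And>x. in_l2 x \<Longrightarrow> (\<forall>i. summable (\<lambda>j. A i j * x j))
     \<and> in_l2 (mv A x) \<and> l2norm (mv A x) \<le> C * l2norm x"
    unfolding bounded_l2_def by blast
  have "fbS A C" unfolding fbS_def
  proof (intro allI impI)
    fix R T and x :: ivec assume R: "finite (R::nat set)" and T: "finite (T::nat set)"
    define x' where "x' j = (if j \<in> T then x j else 0)" for j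
    have x'l: "in_l2 x'" unfolding in_l2_def
      by (rule summable_finite[OF T]) (auto simp: x'_def)
    have mvx: "mv A x' i = (\<Sum>j\<in>T. A i j * x j)" for i
      by (subst mv_fin[OF T]) (auto simp: x'_def)
    have nx: "(l2norm x')^2 = (\<Sum>j\<in>T. (x j)^2)"
      by (subst l2norm_sq[OF x'l], subst suminf_finite[OF T]) (auto simp: x'_def)
    from C[OF x'l] have yl: "in_l2 (mv A x')" and yb: "l2norm (mv A x') \<le> C * l2norm x'" by auto
    have "(\<Sum>i\<in>R. (\<Sum>j\<in>T. A i j * x j)^2) = (\<Sum>i\<in>R. (mv A x' i)^2)" by (simp add: mvx)
    also have "\<dots> \<le> (\<Sum>i. (mv A x' i)^2)"
      using yl unfolding in_l2_def by (intro sum_le_suminf R) auto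
    also have "\<dots> = (l2norm (mv A x'))^2" using l2norm_sq[OF yl] by simp
    also have "\<dots> \<le> (C * l2norm x')^2"
      using yb yl by (intro power_mono) (auto simp: l2norm_def in_l2_def intro!: suminf_nonneg)
    also have "\<dots> = C^2 * (\<Sum>j\<in>T. (x j)^2)" by (simp add: power_mult_distrib nx)
    finally show "(\<Sum>i\<in>R. (\<Sum>j\<in>T. A i j * x j)^2) \<le> C^2 * (\<Sum>j\<in>T. (x j)^2)" .
  qed
  thus ?thesis by blast
qed

definition isinv :: "nat \<Rightarrow> imat \<Rightarrow> imat \<Rightarrow> bool" where
  "isinv N A B \<longleftrightarrow> (\<forall>i<N. \<forall>k<N. (\<Sum>j<N. A i j * B j k) = (if i = k then 1 else 0))"

lemma mat_prod_entry:
  assumes "i < N" "k < N"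
  shows "(mat N N (\<lambda>(i,j). A i j) * mat N N (\<lambda>(i,j). B i j)) $$ (i,k) = (\<Sum>j<N. A i j * B j k)"
  using assms by (simp add: scalar_prod_def atLeast0LessThan)

lemma isinv_mat:
  "isinv N A B \<longleftrightarrow> mat N N (\<lambda>(i,j). A i j) * mat N N (\<lambda>(i,j). B i j) = 1\<^sub>m N"
proof
  assume "isinv N A B"
  thus "mat N N (\<lambda>(i,j). A i j) * mat N N (\<lambda>(i,j). B i j) = 1\<^sub>m N"
  proof (intro eq_matI)
    fix i k assume ik: "i < dim_row (1\<^sub>m N)" "k < dim_col (1\<^sub>m N)"
    show "(mat N N (\<lambda>(i,j). A i j) * mat N N (\<lambda>(i,j). B i j)) $$ (i,k) = 1\<^sub>m N $$ (i,k)"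
    proof -
      have "(mat N N (\<lambda>(i,j). A i j) * mat N N (\<lambda>(i,j). B i j)) $$ (i,k) = (\<Sum>j<N. A i j * B j k)"
        by (rule mat_prod_entry) (use ik in auto)
      also have "\<dots> = 1\<^sub>m N $$ (i,k)" using ik \<open>isinv N A B\<close> unfolding isinv_def by auto
      finally show ?thesis .
    qed
  qed auto
next
  assume h: "mat N N (\<lambda>(i,j). A i j) * mat N N (\<lambda>(i,j). B i j) = 1\<^sub>m N"
  show "isinv N A B" unfolding isinv_def
  proof (intro allI impI)
    fix i k assume "i < N" "k < N"
    have e: "(mat N N (\<lambda>(i,j). A i j) * mat N N (\<lambda>(i,j). B i j)) $$ (i,k) = (\<Sum>j<N. A i j * B j k)"
      by (rule mat_prod_entry) fact+
    from arg_cong[OF h, of "\<lambda>m. m $$ (i,k)"]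
    have "(\<Sum>j<N. A i j * B j k) = 1\<^sub>m N $$ (i,k)" by (metis e)
    thus "(\<Sum>j<N. A i j * B j k) = (if i = k then 1 else 0)"
      using \<open>i<N\<close> \<open>k<N\<close> by simp
  qed
qed

lemma isinv_sym: "isinv N A B \<Longrightarrow> isinv N B A"
  unfolding isinv_mat by (rule mat_mult_left_right_inverse) auto

lemma fin_inverse:
  fixes A :: imat
  assumes inj: "\<And>x. (\<forall>i<N. (\<Sum>j<N. A i j * x j) = 0) \<Longrightarrow> (\<forall>j<N. x j = 0)"
  shows "\<exists>B. isinv N A B \<and> isinv N B A"
proof -
  define Am where "Am = mat N N (\<lambda>(i,j). A i j)"
  have Ac: "Am \<in> carrier_mat N N" unfolding Am_def by simp
  have "det Am \<noteq> 0"
  proof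
    assume "det Am = 0"
    then obtain v where v: "v \<in> carrier_vec N" "v \<noteq> 0\<^sub>v N" "Am *\<^sub>v v = 0\<^sub>v N"
      using det_0_iff_vec_prod_zero[OF Ac] by blast
    have "\<forall>i<N. (\<Sum>j<N. A i j * v $ j) = 0"
    proof (intro allI impI)
      fix i assume "i < N"
      from arg_cong[OF v(3), of "\<lambda>w. w $ i"] \<open>i<N\<close> v(1)
      show "(\<Sum>j<N. A i j * v $ j) = 0"
        by (simp add: Am_def scalar_prod_def atLeast0LessThan)
    qed
    from inj[OF this] have "v = 0\<^sub>v N" using v(1) by (intro eq_vecI) auto
    with v(2) show False by simp
  qed
  from det_non_zero_imp_unit[OF Ac this, of undefined]
  obtain Bm where B: "Bm \<in> carrier_mat N N" "Am * Bm = 1\<^sub>m N"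
    unfolding Units_def ring_mat_def by auto
  define B where "B i j = Bm $$ (i,j)" for i j
  have "Bm = mat N N (\<lambda>(i,j). B i j)" using B(1) unfolding B_def by (intro eq_matI) auto
  with B(2) have "isinv N A B" unfolding isinv_mat Am_def by simp
  thus ?thesis using isinv_sym by blast
qed

definition bix :: "(nat \<Rightarrow> nat) \<Rightarrow> nat \<Rightarrow> nat" where
  "bix nb r = (LEAST i. r < nb (Suc i))"

lemma sum_ext:
  fixes m n :: nat
  assumes "m \<le> n" "\<And>s. m \<le> s \<Longrightarrow> s < n \<Longrightarrow> f s = 0"
  shows "(\<Sum>s<n. f s) = (\<Sum>s<m. f s)"
proof (rule sum.mono_neutral_right)
  show "finite {..<n}" by simp
  show "{..<m} \<subseteq> {..<n}" using assms(1) by auto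
  show "\<forall>i\<in>{..<n} - {..<m}. f i = 0" using assms(2) by auto
qed

lemma sum_if_lt:
  fixes m n :: nat
  assumes "m \<le> n"
  shows "(\<Sum>s<n. if s < m then f s else 0) = (\<Sum>s<m. f s)"
proof -
  have "(\<Sum>s<n. if s < m then f s else 0) = (\<Sum>s<m. if s < m then f s else 0)"
    by (rule sum_ext[OF assms]) simp
  also have "\<dots> = (\<Sum>s<m. f s)" by simp
  finally show ?thesis .
qed

lemma sum_swap_l:
  fixes f :: "'a \<Rightarrow> real"
  shows "(\<Sum>s\<in>A. f s * (\<Sum>t\<in>B. g s t)) = (\<Sum>t\<in>B. \<Sum>s\<in>A. f s * g s t)"
  unfolding sum_distrib_left by (rule sum.swap)

lemma sum_swap_r:
  fixes h :: "'a \<Rightarrow> real"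
  shows "(\<Sum>s\<in>A. (\<Sum>t\<in>B. g s t) * h s) = (\<Sum>t\<in>B. \<Sum>s\<in>A. g s t * h s)"
  unfolding sum_distrib_right by (rule sum.swap)

locale bstr =
  fixes nb :: "nat \<Rightarrow> nat"
  assumes nb0: "nb 0 = 0" and smono: "strict_mono nb"
begin

abbreviation "bi \<equiv> bix nb"

lemma bix_lt: "r < nb (Suc (bi r))"
proof -
  have "r < nb (Suc r)" using strict_mono_imp_increasing[OF smono, of "Suc r"] by simp
  thus ?thesis unfolding bix_def by (rule LeastI)
qed

lemma bix_ge: "nb (bi r) \<le> r"
proof (cases "bi r")
  case 0 thus ?thesis using nb0 by simp
next
  case (Suc k)
  have "k < bi r" using Suc by simp
  hence "\<not> r < nb (Suc k)" unfolding bix_def by (rule not_less_Least)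
  thus ?thesis using Suc by simp
qed

lemma nb_le_iff: "nb a \<le> nb b \<longleftrightarrow> a \<le> b"
  using smono by (simp add: strict_mono_less_eq)

lemma lt_nb_iff: "r < nb k \<longleftrightarrow> bi r < k"
proof
  assume "r < nb k"
  show "bi r < k"
  proof (rule ccontr)
    assume "\<not> bi r < k"
    hence "nb k \<le> nb (bi r)" using nb_le_iff by simp
    with bix_ge[of r] \<open>r < nb k\<close> show False by simp
  qed
next
  assume "bi r < k"
  hence "nb (Suc (bi r)) \<le> nb k" using nb_le_iff by simp
  with bix_lt[of r] show "r < nb k" by simp
qed

lemma blk_iff: "r \<in> blk nb i \<longleftrightarrow> bi r = i"
  unfolding blk_def using lt_nb_iff[of r i] lt_nb_iff[of r "Suc i"] by auto

lemma blk_fin: "finite (blk nb i)" unfolding blk_def by simp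

lemma blk_sub: "blk nb k \<subseteq> {..<nb (Suc k)}" unfolding blk_def by auto

lemma sum_blocks: "(\<Sum>i<nb p. f i) = (\<Sum>k<p. \<Sum>i\<in>blk nb k. f i)"
proof (induction p)
  case 0 thus ?case using nb0 by simp
next
  case (Suc p)
  have le: "nb p \<le> nb (Suc p)" using nb_le_iff by simp
  have "(\<Sum>i<nb (Suc p). f i) = (\<Sum>i\<in>{0..<nb (Suc p)}. f i)" by (simp add: atLeast0LessThan)
  also have "\<dots> = (\<Sum>i\<in>{0..<nb p}. f i) + (\<Sum>i\<in>{nb p..<nb (Suc p)}. f i)"
    by (rule sum.atLeastLessThan_concat[symmetric]) (use le in auto)
  finally have "(\<Sum>i<nb (Suc p). f i) = (\<Sum>i\<in>{0..<nb p}. f i) + (\<Sum>i\<in>{nb p..<nb (Suc p)}. f i)" .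
  thus ?case using Suc by (simp add: atLeast0LessThan blk_def)
qed

lemma block_zero_iff: "block_zero nb A i j \<longleftrightarrow> (\<forall>r c. bi r = i \<longrightarrow> bi c = j \<longrightarrow> A r c = 0)"
  unfolding block_zero_def using blk_iff by blast

end

locale lu = bstr nb for nb :: "nat \<Rightarrow> nat" +
  fixes M :: imat and b0 :: nat and c Cm :: real
  assumes band: "\<And>i j. M i j \<noteq> 0 \<Longrightarrow> bix nb j \<le> bix nb i + b0 \<and> bix nb i \<le> bix nb j + b0"
  and cpos: "c > 0"
  and ell: "\<And>N x. c * (\<Sum>j<N. (x j)^2) \<le> (\<Sum>i<N. x i * (\<Sum>j<N. M i j * x j))"
  and fbM: "fbS M Cm" and Cm1: "Cm \<ge> 1"
begin

lemma M_inj: "(\<forall>i<N. (\<Sum>j<N. M i j * x j) = 0) \<Longrightarrow> (\<forall>j<N. x j = 0)"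
proof -
  assume h: "\<forall>i<N. (\<Sum>j<N. M i j * x j) = 0"
  have "c * (\<Sum>j<N. (x j)^2) \<le> 0" using ell[where N=N and x=x] h by simp
  hence "(\<Sum>j<N. (x j)^2) \<le> 0" using cpos by (simp add: mult_le_0_iff)
  hence "(\<Sum>j<N. (x j)^2) = 0" by (meson antisym sum_nonneg zero_le_power2)
  thus ?thesis by (simp add: sum_nonneg_eq_0_iff)
qed

definition Sinv :: "nat \<Rightarrow> imat" where
  "Sinv k = (SOME B. isinv (nb k) M B \<and> isinv (nb k) B M)"

lemma Sinv: "isinv (nb k) M (Sinv k)" "isinv (nb k) (Sinv k) M"
proof -
  have "\<exists>B. isinv (nb k) M B \<and> isinv (nb k) B M"
    by (rule fin_inverse) (use M_inj in blast)
  hence "isinv (nb k) M (Sinv k) \<and> isinv (nb k) (Sinv k) M"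
    unfolding Sinv_def by (rule someI_ex)
  thus "isinv (nb k) M (Sinv k)" "isinv (nb k) (Sinv k) M" by auto
qed

lemma SinvE1: "i < nb k \<Longrightarrow> j < nb k \<Longrightarrow> (\<Sum>t<nb k. M i t * Sinv k t j) = (if i = j then 1 else 0)"
  using Sinv(1) unfolding isinv_def by blast
lemma SinvE2: "i < nb k \<Longrightarrow> j < nb k \<Longrightarrow> (\<Sum>t<nb k. Sinv k i t * M t j) = (if i = j then 1 else 0)"
  using Sinv(2) unfolding isinv_def by blast

definition Linv :: imat where
  "Linv i s = (if s = i then 1 else 0)
     - (if s < nb (bi i) then (\<Sum>t<nb (bi i). M i t * Sinv (bi i) t s) else 0)"

definition Uu :: imat where
  "Uu i j = (\<Sum>s<nb (Suc (bi i)). Linv i s * M s j)"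

definition Uinv :: imat where
  "Uinv s j = (if s < nb (Suc (bi j)) then Sinv (Suc (bi j)) s j else 0)"

definition Ll :: imat where
  "Ll i j = (\<Sum>s<nb (Suc (bi j)). M i s * Sinv (Suc (bi j)) s j)"

lemma Linv_zero: "bi i < bi s \<Longrightarrow> Linv i s = 0"
proof -
  assume h: "bi i < bi s"
  hence "s \<noteq> i" by auto
  moreover have "\<not> s < nb (bi i)" using h lt_nb_iff by simp
  ultimately show ?thesis unfolding Linv_def by simp
qed

lemma Linv_diag: "bi s = bi i \<Longrightarrow> Linv i s = (if s = i then 1 else 0)"
  unfolding Linv_def using lt_nb_iff by simp

lemma Uinv_zero: "bi j < bi s \<Longrightarrow> Uinv s j = 0"
  unfolding Uinv_def using lt_nb_iff by simp

lemma Ll_unit: "bi i \<le> bi j \<Longrightarrow> Ll i j = (if i = j then 1 else 0)"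
  unfolding Ll_def by (rule SinvE1) (simp_all add: lt_nb_iff)

lemma Ll_band: "bi i > bi j + b0 \<Longrightarrow> Ll i j = 0"
  unfolding Ll_def
proof (intro sum.neutral ballI)
  fix s assume "bi i > bi j + b0" "s \<in> {..<nb (Suc (bi j))}"
  hence "M i s = 0" using band[of i s] lt_nb_iff by fastforce
  thus "M i s * Sinv (Suc (bi j)) s j = 0" by simp
qed

lemma Uu_formula:
  "Uu i j = M i j - (\<Sum>t<nb (bi i). M i t * (\<Sum>s<nb (bi i). Sinv (bi i) t s * M s j))"
proof -
  let ?k = "bi i"
  have le: "nb ?k \<le> nb (Suc ?k)" using nb_le_iff by simp
  have "Uu i j = (\<Sum>s<nb (Suc ?k). (if s = i then M s j else 0)
      - (if s < nb ?k then (\<Sum>t<nb ?k. M i t * Sinv ?k t s) * M s j else 0))"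
    unfolding Uu_def Linv_def by (rule sum.cong) (auto simp: left_diff_distrib)
  also have "\<dots> = (\<Sum>s<nb (Suc ?k). (if s = i then M s j else 0))
      - (\<Sum>s<nb (Suc ?k). if s < nb ?k then (\<Sum>t<nb ?k. M i t * Sinv ?k t s) * M s j else 0)"
    by (rule sum_subtractf)
  also have "(\<Sum>s<nb (Suc ?k). (if s = i then M s j else 0)) = M i j"
    using bix_lt[of i] by simp
  also have "(\<Sum>s<nb (Suc ?k). if s < nb ?k then (\<Sum>t<nb ?k. M i t * Sinv ?k t s) * M s j else 0)
     = (\<Sum>s<nb ?k. (\<Sum>t<nb ?k. M i t * Sinv ?k t s) * M s j)"
    by (rule sum_if_lt[OF le])
  also have "\<dots> = (\<Sum>t<nb ?k. M i t * (\<Sum>s<nb ?k. Sinv ?k t s * M s j))"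
    by (simp add: sum_swap_r sum_distrib_left mult.assoc)
  finally show ?thesis .
qed

lemma Uu_upper: "bi j < bi i \<Longrightarrow> Uu i j = 0"
proof -
  assume h: "bi j < bi i"
  hence jl: "j < nb (bi i)" using lt_nb_iff by simp
  have "(\<Sum>t<nb (bi i). M i t * (\<Sum>s<nb (bi i). Sinv (bi i) t s * M s j))
      = (\<Sum>t<nb (bi i). (if t = j then M i t else 0))"
    by (rule sum.cong) (use jl SinvE2 in auto)
  also have "\<dots> = M i j" using jl by simp
  finally show ?thesis unfolding Uu_formula by simp
qed

lemma Uu_band: "bi j > bi i + b0 \<Longrightarrow> Uu i j = 0"
  unfolding Uu_def
proof (intro sum.neutral ballI)
  fix s assume h: "bi j > bi i + b0" "s \<in> {..<nb (Suc (bi i))}"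
  hence "M s j = 0" using band[of s j] lt_nb_iff by fastforce
  thus "Linv i s * M s j = 0" by simp
qed

lemma Linv_out: "nb (Suc (bi i)) \<le> s \<Longrightarrow> Linv i s = 0"
  using Linv_zero lt_nb_iff by (meson Suc_le_eq not_less)

lemma I1: "j < nb n \<Longrightarrow> (\<Sum>t<nb n. M i t * Uinv t j) = Ll i j"
proof -
  assume "j < nb n"
  hence le: "nb (Suc (bi j)) \<le> nb n" using lt_nb_iff nb_le_iff by simp
  have "(\<Sum>t<nb n. M i t * Uinv t j) = (\<Sum>t<nb (Suc (bi j)). M i t * Uinv t j)"
    by (rule sum_ext[OF le]) (simp add: Uinv_def)
  also have "\<dots> = Ll i j" unfolding Ll_def Uinv_def by simp
  finally show ?thesis .
qed

lemma I2: "i < nb n \<Longrightarrow> (\<Sum>s<nb n. Linv i s * M s j) = Uu i j"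
proof -
  assume "i < nb n"
  hence le: "nb (Suc (bi i)) \<le> nb n" using lt_nb_iff nb_le_iff by simp
  show ?thesis unfolding Uu_def by (rule sum_ext[OF le]) (simp add: Linv_out)
qed

lemma I3: "isinv (nb n) Linv Ll"
  unfolding isinv_def
proof (intro allI impI)
  fix i j assume i: "i < nb n" and j: "j < nb n"
  show "(\<Sum>s<nb n. Linv i s * Ll s j) = (if i = j then 1 else 0)"
  proof (cases "bi i \<le> bi j")
    case True
    have "(\<Sum>s<nb n. Linv i s * Ll s j) = (\<Sum>s<nb n. if s = j then Linv i s else 0)"
    proof (rule sum.cong)
      fix s assume "s \<in> {..<nb n}"
      show "Linv i s * Ll s j = (if s = j then Linv i s else 0)"
      proof (cases "bi s \<le> bi j")
        case True thus ?thesis using Ll_unit by simp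
      next
        case False
        hence "Linv i s = 0" using \<open>bi i \<le> bi j\<close> by (intro Linv_zero) simp
        thus ?thesis by auto
      qed
    qed simp
    also have "\<dots> = Linv i j" using j by simp
    also have "\<dots> = (if i = j then 1 else 0)"
      unfolding Linv_def using True lt_nb_iff by auto
    finally show ?thesis .
  next
    case False
    let ?k = "bi j"
    have "(\<Sum>s<nb n. Linv i s * Ll s j)
        = (\<Sum>t<nb (Suc ?k). (\<Sum>s<nb n. Linv i s * M s t) * Sinv (Suc ?k) t j)"
      unfolding Ll_def by (simp add: sum_swap_l sum_distrib_right mult.assoc)
    also have "\<dots> = (\<Sum>t<nb (Suc ?k). Uu i t * Sinv (Suc ?k) t j)"
      using I2[OF i] by simp
    also have "\<dots> = 0"
    proof (intro sum.neutral ballI)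
      fix t assume "t \<in> {..<nb (Suc ?k)}"
      hence "bi t < bi i" using False lt_nb_iff by auto
      thus "Uu i t * Sinv (Suc ?k) t j = 0" using Uu_upper by simp
    qed
    finally show ?thesis using False by auto
  qed
qed

lemma I4: "isinv (nb n) Ll Linv" using I3 isinv_sym by blast

lemma I5: "isinv (nb n) Uu Uinv"
  unfolding isinv_def
proof (intro allI impI)
  fix i j assume i: "i < nb n" and j: "j < nb n"
  have "(\<Sum>s<nb n. Uu i s * Uinv s j) = (\<Sum>s<nb n. (\<Sum>t<nb n. Linv i t * M t s) * Uinv s j)"
    using I2[OF i] by simp
  also have "\<dots> = (\<Sum>t<nb n. Linv i t * (\<Sum>s<nb n. M t s * Uinv s j))"
    by (simp add: sum_swap_r sum_distrib_left mult.assoc)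
  also have "\<dots> = (\<Sum>t<nb n. Linv i t * Ll t j)" using I1[OF j] by simp
  also have "\<dots> = (if i = j then 1 else 0)" using I3 i j unfolding isinv_def by blast
  finally show "(\<Sum>s<nb n. Uu i s * Uinv s j) = (if i = j then 1 else 0)" .
qed

lemma I6: "isinv (nb n) Uinv Uu" using I5 isinv_sym by blast

lemma I7: "i < nb n \<Longrightarrow> (\<Sum>s<nb n. Ll i s * Uu s j) = M i j"
proof -
  assume i: "i < nb n"
  have "(\<Sum>s<nb n. Ll i s * Uu s j) = (\<Sum>s<nb n. Ll i s * (\<Sum>t<nb n. Linv s t * M t j))"
    using I2 by simp
  also have "\<dots> = (\<Sum>t<nb n. (\<Sum>s<nb n. Ll i s * Linv s t) * M t j)"
    by (simp add: sum_swap_l sum_distrib_right mult.assoc)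
  also have "\<dots> = (\<Sum>t<nb n. if t = i then M t j else 0)"
    by (rule sum.cong) (use I4 i in \<open>auto simp: isinv_def\<close>)
  also have "\<dots> = M i j" using i by simp
  finally show ?thesis .
qed

end

lemma card_band:
  fixes m b q :: nat
  shows "(\<Sum>l<q. (if l \<le> m + b \<and> m \<le> l + b then 1 else 0)::real) \<le> 2 * real b + 1"
proof -
  let ?B = "{l. l \<le> m + b \<and> m \<le> l + b}"
  have "(\<Sum>l<q. (if l \<le> m + b \<and> m \<le> l + b then 1 else 0)::real) = (\<Sum>l\<in>{..<q} \<inter> ?B. 1)"
    by (subst sum.inter_restrict) auto
  also have "\<dots> = real (card ({..<q} \<inter> ?B))" by simp
  also have "card ({..<q} \<inter> ?B) \<le> card {m - b .. m + b}"
    by (rule card_mono) auto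
  also have "card {m - b .. m + b} \<le> 2 * b + 1" by simp
  finally show ?thesis by simp
qed

lemma sq_diff_le: "((a::real) - b)^2 \<le> 2 * a^2 + 2 * b^2"
proof -
  have "0 \<le> (a + b)^2" by simp
  thus ?thesis by (simp add: power2_diff power2_sum)
qed

lemma triple:
  fixes a u :: "nat \<Rightarrow> real"
  shows "(\<Sum>t\<in>B. (\<Sum>r\<in>K. a r * (\<Sum>s\<in>K'. b r s * m s t)) * u t)
    = (\<Sum>r\<in>K. a r * (\<Sum>s\<in>K'. b r s * (\<Sum>t\<in>B. m s t * u t)))"
proof -
  have "(\<Sum>t\<in>B. (\<Sum>r\<in>K. a r * (\<Sum>s\<in>K'. b r s * m s t)) * u t)
      = (\<Sum>t\<in>B. \<Sum>r\<in>K. \<Sum>s\<in>K'. a r * (b r s * (m s t * u t)))"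
    by (simp add: sum_distrib_left sum_distrib_right mult.assoc)
  also have "\<dots> = (\<Sum>r\<in>K. \<Sum>t\<in>B. \<Sum>s\<in>K'. a r * (b r s * (m s t * u t)))"
    by (rule sum.swap)
  also have "\<dots> = (\<Sum>r\<in>K. \<Sum>s\<in>K'. \<Sum>t\<in>B. a r * (b r s * (m s t * u t)))"
    by (rule sum.cong[OF refl], rule sum.swap)
  also have "\<dots> = (\<Sum>r\<in>K. a r * (\<Sum>s\<in>K'. b r s * (\<Sum>t\<in>B. m s t * u t)))"
    by (simp add: sum_distrib_left)
  finally show ?thesis .
qed

context lu begin

lemma ellE:
  assumes h: "\<And>s. s < N \<Longrightarrow> (\<Sum>t<N. M s t * z t) = v s"
  shows "c^2 * (\<Sum>t<N. (z t)^2) \<le> (\<Sum>s<N. (v s)^2)"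
proof -
  define Z where "Z = (\<Sum>t<N. (z t)^2)"
  define V where "V = (\<Sum>s<N. (v s)^2)"
  define P where "P = (\<Sum>s<N. z s * v s)"
  have Z0: "0 \<le> Z" unfolding Z_def by (intro sum_nonneg) auto
  have V0: "0 \<le> V" unfolding V_def by (intro sum_nonneg) auto
  have cZ: "c * Z \<le> P" using ell[where N=N and x=z] h unfolding Z_def P_def by simp
  have PP: "P^2 \<le> Z * V" unfolding P_def Z_def V_def by (rule cs_sum)
  show ?thesis
  proof (cases "Z = 0")
    case True thus ?thesis using V0 unfolding Z_def V_def by simp
  next
    case False
    with Z0 have Zp: "Z > 0" by simp
    have "0 \<le> c * Z" using cpos Z0 by simp
    hence "(c * Z)^2 \<le> P^2" using cZ by (intro power_mono) auto
    with PP have "c^2 * Z * Z \<le> V * Z" by (simp add: power2_eq_square algebra_simps)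
    hence "c^2 * Z \<le> V" using Zp by simp
    thus ?thesis unfolding Z_def V_def .
  qed
qed

lemma fbM_blk:
  "finite R \<Longrightarrow> finite T \<Longrightarrow> (\<Sum>i\<in>R. (\<Sum>j\<in>T. M i j * x j)^2) \<le> Cm^2 * (\<Sum>j\<in>T. (x j)^2)"
  by (rule fbSD[OF fbM])

lemma sum_blk_if: "blk nb j \<subseteq> {..<N} \<Longrightarrow> (\<Sum>r<N. if r \<in> blk nb j then f r else 0) = (\<Sum>r\<in>blk nb j. f r)"
  by (subst sum.inter_restrict[symmetric]) (auto simp: Int_absorb1)

lemma zsolve:
  fixes u :: ivec and j :: nat
  defines "z \<equiv> \<lambda>s. \<Sum>t\<in>blk nb j. Sinv (Suc j) s t * u t"
  assumes r: "r < nb (Suc j)"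
  shows "(\<Sum>s<nb (Suc j). M r s * z s) = (if r \<in> blk nb j then u r else 0)"
proof -
  have "(\<Sum>s<nb (Suc j). M r s * z s) = (\<Sum>t\<in>blk nb j. (\<Sum>s<nb (Suc j). M r s * Sinv (Suc j) s t) * u t)"
    unfolding z_def by (simp add: sum_swap_l sum_distrib_right mult.assoc)
  also have "\<dots> = (\<Sum>t\<in>blk nb j. if t = r then u t else 0)"
  proof (rule sum.cong)
    fix t assume "t \<in> blk nb j"
    hence "t < nb (Suc j)" using blk_sub by auto
    thus "(\<Sum>s<nb (Suc j). M r s * Sinv (Suc j) s t) * u t = (if t = r then u t else 0)"
      using SinvE1[OF r] by auto
  qed simp
  also have "\<dots> = (if r \<in> blk nb j then u r else 0)" using blk_fin by simp
  finally show ?thesis .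
qed

lemma zbound:
  fixes u :: ivec and j :: nat
  defines "z \<equiv> \<lambda>s. \<Sum>t\<in>blk nb j. Sinv (Suc j) s t * u t"
  shows "c^2 * (\<Sum>s<nb (Suc j). (z s)^2) \<le> (\<Sum>t\<in>blk nb j. (u t)^2)"
proof -
  have "c^2 * (\<Sum>s<nb (Suc j). (z s)^2) \<le> (\<Sum>r<nb (Suc j). (if r \<in> blk nb j then u r else 0)^2)"
    by (rule ellE) (use zsolve in \<open>auto simp: z_def\<close>)
  also have "\<dots> = (\<Sum>r<nb (Suc j). if r \<in> blk nb j then (u r)^2 else 0)"
    by (rule sum.cong) auto
  also have "\<dots> = (\<Sum>t\<in>blk nb j. (u t)^2)" by (rule sum_blk_if[OF blk_sub])
  finally show ?thesis .
qed

lemma Ll_blockb: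
  fixes u :: ivec
  shows "(\<Sum>i\<in>blk nb k. (\<Sum>t\<in>blk nb j. Ll i t * u t)^2) \<le> (Cm/c)^2 * (\<Sum>t\<in>blk nb j. (u t)^2)"
proof -
  define z where "z = (\<lambda>s. \<Sum>t\<in>blk nb j. Sinv (Suc j) s t * u t)"
  have eq: "(\<Sum>t\<in>blk nb j. Ll i t * u t) = (\<Sum>s<nb (Suc j). M i s * z s)" for i
  proof -
    have "(\<Sum>t\<in>blk nb j. Ll i t * u t) = (\<Sum>t\<in>blk nb j. (\<Sum>s<nb (Suc j). M i s * Sinv (Suc j) s t) * u t)"
      by (rule sum.cong) (auto simp: Ll_def blk_iff)
    also have "\<dots> = (\<Sum>s<nb (Suc j). M i s * z s)"
      unfolding z_def by (simp add: sum_swap_l sum_distrib_right mult.assoc)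
    finally show ?thesis .
  qed
  have "(\<Sum>i\<in>blk nb k. (\<Sum>t\<in>blk nb j. Ll i t * u t)^2) \<le> Cm^2 * (\<Sum>s<nb (Suc j). (z s)^2)"
    unfolding eq by (rule fbM_blk) (auto simp: blk_fin)
  also have "\<dots> \<le> Cm^2 * ((\<Sum>t\<in>blk nb j. (u t)^2) / c^2)"
  proof -
    have zb: "c^2 * (\<Sum>s<nb (Suc j). (z s)^2) \<le> (\<Sum>t\<in>blk nb j. (u t)^2)"
      unfolding z_def by (rule zbound)
    hence "(\<Sum>s<nb (Suc j). (z s)^2) \<le> (\<Sum>t\<in>blk nb j. (u t)^2) / c^2"
      using cpos by (simp add: field_simps)
    thus ?thesis by (rule mult_left_mono) simp
  qed
  also have "\<dots> = (Cm/c)^2 * (\<Sum>t\<in>blk nb j. (u t)^2)" by (simp add: power_divide)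
  finally show ?thesis .
qed

definition KU :: real where "KU = 2 * (Cm + Cm^2 / c)"

lemma Uu_blockb:
  fixes u :: ivec
  shows "(\<Sum>i\<in>blk nb k. (\<Sum>t\<in>blk nb j. Uu i t * u t)^2) \<le> KU^2 * (\<Sum>t\<in>blk nb j. (u t)^2)"
proof -
  define U2 where "U2 = (\<Sum>t\<in>blk nb j. (u t)^2)"
  have U20: "0 \<le> U2" unfolding U2_def by (intro sum_nonneg) auto
  define v where "v = (\<lambda>s. \<Sum>t\<in>blk nb j. M s t * u t)"
  define w where "w = (\<lambda>r. \<Sum>s<nb k. Sinv k r s * v s)"
  have eq: "(\<Sum>t\<in>blk nb j. Uu i t * u t) = v i - (\<Sum>r<nb k. M i r * w r)" if "i \<in> blk nb k" for i
  proof -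
    have bi: "bi i = k" using that blk_iff by simp
    have "(\<Sum>t\<in>blk nb j. Uu i t * u t)
       = (\<Sum>t\<in>blk nb j. M i t * u t - (\<Sum>r<nb k. M i r * (\<Sum>s<nb k. Sinv k r s * M s t)) * u t)"
      by (rule sum.cong) (simp_all add: Uu_formula bi left_diff_distrib)
    also have "\<dots> = v i - (\<Sum>t\<in>blk nb j. (\<Sum>r<nb k. M i r * (\<Sum>s<nb k. Sinv k r s * M s t)) * u t)"
      unfolding v_def by (rule sum_subtractf)
    also have "(\<Sum>t\<in>blk nb j. (\<Sum>r<nb k. M i r * (\<Sum>s<nb k. Sinv k r s * M s t)) * u t)
        = (\<Sum>r<nb k. M i r * w r)"
      unfolding w_def v_def by (rule triple)
    finally show ?thesis .
  qed
  have wsolve: "(\<Sum>r<nb k. M s r * w r) = v s" if "s < nb k" for s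
  proof -
    have "(\<Sum>r<nb k. M s r * w r) = (\<Sum>s'<nb k. (\<Sum>r<nb k. M s r * Sinv k r s') * v s')"
      unfolding w_def by (simp add: sum_swap_l sum_distrib_right mult.assoc)
    also have "\<dots> = (\<Sum>s'<nb k. if s' = s then v s' else 0)"
      by (rule sum.cong) (use that SinvE1 in auto)
    also have "\<dots> = v s" using that by simp
    finally show ?thesis .
  qed
  have wb: "c^2 * (\<Sum>r<nb k. (w r)^2) \<le> (\<Sum>s<nb k. (v s)^2)"
    by (rule ellE) (use wsolve in auto)
  have vb1: "(\<Sum>s<nb k. (v s)^2) \<le> Cm^2 * U2"
    unfolding v_def U2_def by (rule fbM_blk) (auto simp: blk_fin)
  have vb2: "(\<Sum>i\<in>blk nb k. (v i)^2) \<le> Cm^2 * U2"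
    unfolding v_def U2_def by (rule fbM_blk) (auto simp: blk_fin)
  have wb2: "(\<Sum>i\<in>blk nb k. (\<Sum>r<nb k. M i r * w r)^2) \<le> Cm^2 * (\<Sum>r<nb k. (w r)^2)"
    by (rule fbM_blk) (auto simp: blk_fin)
  have w2: "(\<Sum>r<nb k. (w r)^2) \<le> Cm^2 * U2 / c^2"
    using wb vb1 cpos by (simp add: field_simps)
  have "(\<Sum>i\<in>blk nb k. (\<Sum>t\<in>blk nb j. Uu i t * u t)^2)
      = (\<Sum>i\<in>blk nb k. (v i - (\<Sum>r<nb k. M i r * w r))^2)"
    by (rule sum.cong) (simp_all add: eq)
  also have "\<dots> \<le> (\<Sum>i\<in>blk nb k. 2 * (v i)^2 + 2 * (\<Sum>r<nb k. M i r * w r)^2)"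
    by (rule sum_mono) (rule sq_diff_le)
  also have "\<dots> = 2 * (\<Sum>i\<in>blk nb k. (v i)^2) + 2 * (\<Sum>i\<in>blk nb k. (\<Sum>r<nb k. M i r * w r)^2)"
    by (simp add: sum.distrib sum_distrib_left)
  also have "\<dots> \<le> 2 * (Cm^2 * U2) + 2 * (Cm^2 * (Cm^2 * U2 / c^2))"
  proof -
    have "Cm^2 * (\<Sum>r<nb k. (w r)^2) \<le> Cm^2 * (Cm^2 * U2 / c^2)"
      by (rule mult_left_mono[OF w2]) simp
    thus ?thesis using vb2 wb2 by linarith
  qed
  also have "\<dots> \<le> KU^2 * U2"
  proof -
    have "2 * (Cm^2 * U2) + 2 * (Cm^2 * (Cm^2 * U2 / c^2)) = (2 * Cm^2 + 2 * (Cm^2/c)^2) * U2"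
      by (simp add: field_simps power2_eq_square)
    also have "2 * Cm^2 + 2 * (Cm^2/c)^2 \<le> KU^2"
    proof -
      define X where "X = Cm^2/c"
      have X0: "0 \<le> X" unfolding X_def using cpos by simp
      have a: "0 \<le> Cm * X" using X0 Cm1 by simp
      have b: "0 \<le> Cm * Cm" "0 \<le> X * X" using X0 by simp_all
      have "2 * Cm^2 + 2 * X^2 \<le> (2 * (Cm + X))^2"
        using a b by (simp add: power2_eq_square algebra_simps)
      thus ?thesis unfolding KU_def X_def .
    qed
    hence "(2 * Cm^2 + 2 * (Cm^2/c)^2) * U2 \<le> KU^2 * U2" using U20 by (rule mult_right_mono)
    finally show ?thesis .
  qed
  finally show ?thesis unfolding U2_def .
qed

end

context bstr begin

lemma exists_nb:
  fixes T :: "nat set"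
  shows "finite T \<Longrightarrow> \<exists>q. T \<subseteq> {..<nb q}"
proof -
  assume "finite T"
  then obtain k where "T \<subseteq> {..<k}" using finite_nat_bounded by blast
  moreover have "k \<le> nb k" by (rule strict_mono_imp_increasing[OF smono])
  ultimately show ?thesis by (intro exI[of _ k]) auto
qed

lemma sum_T_blocks:
  assumes T: "finite T" "T \<subseteq> {..<nb q}"
  shows "(\<Sum>j\<in>T. f j) = (\<Sum>l<q. \<Sum>t\<in>blk nb l. if t \<in> T then f t else 0)"
proof -
  have "(\<Sum>j\<in>T. f j) = (\<Sum>j\<in>{..<nb q} \<inter> T. f j)" using T by (simp add: Int_absorb1)
  also have "\<dots> = (\<Sum>j<nb q. if j \<in> T then f j else 0)" by (rule sum.inter_restrict) simp
  also have "\<dots> = (\<Sum>l<q. \<Sum>t\<in>blk nb l. if t \<in> T then f t else 0)" by (rule sum_blocks)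
  finally show ?thesis .
qed

lemma band_fbS:
  assumes bandA: "\<And>i j. A i j \<noteq> 0 \<Longrightarrow> bi j \<le> bi i + b \<and> bi i \<le> bi j + b"
  and blockb: "\<And>k j u. (\<Sum>i\<in>blk nb k. (\<Sum>t\<in>blk nb j. A i t * u t)^2) \<le> K^2 * (\<Sum>t\<in>blk nb j. (u t)^2)"
  shows "fbS A ((2 * real b + 1) * K)"
  unfolding fbS_def
proof (intro allI impI)
  fix R T :: "nat set" and x :: ivec
  assume R: "finite R" and T: "finite (T::nat set)"
  obtain q where Tq: "T \<subseteq> {..<nb q}" using exists_nb[OF T] by blast
  obtain p where Rp: "R \<subseteq> {..<nb p}" using exists_nb[OF R] by blast
  define x' where "x' t = (if t \<in> T then x t else 0)" for t
  define a where "a i l = (\<Sum>t\<in>blk nb l. A i t * x' t)" for i l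
  define g where "g m l = (if l \<le> m + b \<and> m \<le> l + b then 1 else 0 :: real)" for m l
  define X where "X l = (\<Sum>t\<in>blk nb l. (x' t)^2)" for l
  define B where "B = 2 * real b + 1"
  have B0: "0 \<le> B" unfolding B_def by simp
  have r_eq: "(\<Sum>j\<in>T. A i j * x j) = (\<Sum>l<q. a i l)" for i
    unfolding sum_T_blocks[OF T Tq] a_def x'_def by (intro sum.cong) auto
  have a_g: "a i l = g (bi i) l * a i l" for i l
  proof (cases "g (bi i) l = 1")
    case False
    have "a i l = 0" unfolding a_def
    proof (intro sum.neutral ballI)
      fix t assume "t \<in> blk nb l"
      hence "bi t = l" using blk_iff by simp
      hence "A i t = 0" using bandA[of i t] False unfolding g_def by (auto split: if_splits)
      thus "A i t * x' t = 0" by simp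
    qed
    thus ?thesis by simp
  qed simp
  have g01: "(g m l)^2 = g m l" for m l unfolding g_def by simp
  have row: "(\<Sum>l<q. a i l)^2 \<le> B * (\<Sum>l<q. (a i l)^2)" for i
  proof -
    have "(\<Sum>l<q. a i l)^2 = (\<Sum>l<q. g (bi i) l * a i l)^2" by (subst a_g) simp
    also have "\<dots> \<le> (\<Sum>l<q. (g (bi i) l)^2) * (\<Sum>l<q. (a i l)^2)" by (rule cs_sum)
    also have "\<dots> \<le> B * (\<Sum>l<q. (a i l)^2)"
    proof (rule mult_right_mono)
      show "(\<Sum>l<q. (g (bi i) l)^2) \<le> B" unfolding g01 unfolding g_def B_def by (rule card_band)
    qed (intro sum_nonneg, simp)
    finally show ?thesis .
  qed
  have blockkl: "(\<Sum>i\<in>blk nb k. (a i l)^2) \<le> g k l * (K^2 * X l)" for k l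
  proof (cases "g k l = 1")
    case True
    thus ?thesis using blockb[where k=k and j=l and u=x'] unfolding a_def X_def by simp
  next
    case False
    have "(\<Sum>i\<in>blk nb k. (a i l)^2) = 0"
    proof (intro sum.neutral ballI)
      fix i assume "i \<in> blk nb k"
      hence "bi i = k" using blk_iff by simp
      hence "a i l = 0" using a_g[of i l] False unfolding g_def by (auto split: if_splits)
      thus "(a i l)^2 = 0" by simp
    qed
    moreover have "g k l = 0" using False unfolding g_def by (simp split: if_splits)
    ultimately show ?thesis by simp
  qed
  have colk: "(\<Sum>k<p. g k l) \<le> B" for l
  proof -
    have "(\<Sum>k<p. g k l) = (\<Sum>k<p. (if k \<le> l + b \<and> l \<le> k + b then 1 else 0 :: real))"
      unfolding g_def by (rule sum.cong) auto
    also have "\<dots> \<le> B" unfolding B_def by (rule card_band)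
    finally show ?thesis .
  qed
  have X0: "0 \<le> X l" for l unfolding X_def by (intro sum_nonneg) auto
  have "(\<Sum>i\<in>R. (\<Sum>j\<in>T. A i j * x j)^2) = (\<Sum>i\<in>R. (\<Sum>l<q. a i l)^2)" by (simp add: r_eq)
  also have "\<dots> \<le> (\<Sum>i<nb p. (\<Sum>l<q. a i l)^2)" by (rule sum_mono2) (use Rp in auto)
  also have "\<dots> \<le> (\<Sum>i<nb p. B * (\<Sum>l<q. (a i l)^2))" by (rule sum_mono) (rule row)
  also have "\<dots> = B * (\<Sum>l<q. \<Sum>i<nb p. (a i l)^2)"
    by (simp add: sum_distrib_left sum.swap[of _ "{..<nb p}"])
  also have "\<dots> = B * (\<Sum>l<q. \<Sum>k<p. \<Sum>i\<in>blk nb k. (a i l)^2)" by (simp add: sum_blocks)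
  also have "\<dots> \<le> B * (\<Sum>l<q. \<Sum>k<p. g k l * (K^2 * X l))"
    by (intro mult_left_mono B0 sum_mono blockkl)
  also have "\<dots> = B * (\<Sum>l<q. (\<Sum>k<p. g k l) * (K^2 * X l))" by (simp add: sum_distrib_right)
  also have "\<dots> \<le> B * (\<Sum>l<q. B * (K^2 * X l))"
    by (intro mult_left_mono B0 sum_mono mult_right_mono colk) (simp add: X0)
  also have "\<dots> = (B * K)^2 * (\<Sum>l<q. X l)" by (simp add: sum_distrib_left power2_eq_square algebra_simps)
  also have "(\<Sum>l<q. X l) = (\<Sum>j\<in>T. (x j)^2)"
    unfolding sum_T_blocks[OF T Tq] X_def x'_def by (intro sum.cong) auto
  finally show "(\<Sum>i\<in>R. (\<Sum>j\<in>T. A i j * x j)^2) \<le> ((2 * real b + 1) * K)^2 * (\<Sum>j\<in>T. (x j)^2)"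
    unfolding B_def .
qed

end

context lu begin

definition KL :: real where "KL = (2 * real b0 + 1) * (Cm / c)"
definition KUU :: real where "KUU = (2 * real b0 + 1) * KU"

lemma fbS_Ll: "fbS Ll KL"
  unfolding KL_def
proof (rule band_fbS)
  fix i j assume h: "Ll i j \<noteq> 0"
  show "bi j \<le> bi i + b0 \<and> bi i \<le> bi j + b0"
  proof (cases "bi i \<le> bi j")
    case True
    hence "i = j" using h Ll_unit by (auto split: if_splits)
    thus ?thesis by simp
  next
    case False
    have "\<not> bi i > bi j + b0" using h Ll_band by auto
    thus ?thesis using False by auto
  qed
qed (rule Ll_blockb)

lemma fbS_Uu: "fbS Uu KUU"
  unfolding KUU_def
proof (rule band_fbS)
  fix i j assume h: "Uu i j \<noteq> 0"
  show "bi j \<le> bi i + b0 \<and> bi i \<le> bi j + b0"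
  proof -
    have "\<not> bi j < bi i" using h Uu_upper by auto
    moreover have "\<not> bi j > bi i + b0" using h Uu_band by auto
    ultimately show ?thesis by auto
  qed
qed (rule Uu_blockb)

lemma bdp: "block_diag_part nb A r s = (if bi r = bi s then A r s else 0)"
  unfolding block_diag_part_def using blk_iff by auto

lemma fbS_D: "fbS (block_diag_part nb Uu) KU"
proof -
  have "fbS (block_diag_part nb Uu) ((2 * real 0 + 1) * KU)"
  proof (rule band_fbS)
    fix i j assume "block_diag_part nb Uu i j \<noteq> 0"
    thus "bi j \<le> bi i + 0 \<and> bi i \<le> bi j + 0" unfolding bdp by (auto split: if_splits)
  next
    fix k j and u :: ivec
    show "(\<Sum>i\<in>blk nb k. (\<Sum>t\<in>blk nb j. block_diag_part nb Uu i t * u t)^2) \<le> KU^2 * (\<Sum>t\<in>blk nb j. (u t)^2)"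
    proof (cases "k = j")
      case True
      have "(\<Sum>i\<in>blk nb k. (\<Sum>t\<in>blk nb j. block_diag_part nb Uu i t * u t)^2)
          = (\<Sum>i\<in>blk nb k. (\<Sum>t\<in>blk nb j. Uu i t * u t)^2)"
        using True by (intro sum.cong refl arg_cong[where f="\<lambda>x. x^2"]) (auto simp: bdp blk_iff)
      also have "\<dots> \<le> KU^2 * (\<Sum>t\<in>blk nb j. (u t)^2)" by (rule Uu_blockb)
      finally show ?thesis .
    next
      case False
      have "(\<Sum>i\<in>blk nb k. (\<Sum>t\<in>blk nb j. block_diag_part nb Uu i t * u t)^2) = 0"
        using False by (intro sum.neutral ballI) (auto simp: bdp blk_iff)
      moreover have "0 \<le> KU^2 * (\<Sum>t\<in>blk nb j. (u t)^2)" by (intro mult_nonneg_nonneg sum_nonneg) auto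
      ultimately show ?thesis by simp
    qed
  qed
  thus ?thesis by simp
qed

lemma Dinv_blk:
  fixes u :: ivec
  shows "(\<Sum>i\<in>blk nb k. (\<Sum>t\<in>blk nb k. Uinv i t * u t)^2) \<le> (1/c)^2 * (\<Sum>t\<in>blk nb k. (u t)^2)"
proof -
  define z where "z = (\<lambda>s. \<Sum>t\<in>blk nb k. Sinv (Suc k) s t * u t)"
  have eq: "(\<Sum>t\<in>blk nb k. Uinv i t * u t) = z i" if "i \<in> blk nb k" for i
  proof -
    have "i < nb (Suc k)" using that blk_sub by auto
    thus ?thesis unfolding z_def by (intro sum.cong refl) (auto simp: Uinv_def blk_iff)
  qed
  have "(\<Sum>i\<in>blk nb k. (\<Sum>t\<in>blk nb k. Uinv i t * u t)^2) = (\<Sum>i\<in>blk nb k. (z i)^2)"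
    by (intro sum.cong refl) (simp add: eq)
  also have "\<dots> \<le> (\<Sum>i<nb (Suc k). (z i)^2)" by (rule sum_mono2) (use blk_sub in auto)
  also have "\<dots> \<le> (1/c)^2 * (\<Sum>t\<in>blk nb k. (u t)^2)"
  proof -
    have "c^2 * (\<Sum>i<nb (Suc k). (z i)^2) \<le> (\<Sum>t\<in>blk nb k. (u t)^2)"
      unfolding z_def by (rule zbound)
    thus ?thesis using cpos by (simp add: field_simps power_divide)
  qed
  finally show ?thesis .
qed

lemma fbS_Dinv: "fbS (block_diag_part nb Uinv) (1/c)"
proof -
  have "fbS (block_diag_part nb Uinv) ((2 * real 0 + 1) * (1/c))"
  proof (rule band_fbS)
    fix i j assume "block_diag_part nb Uinv i j \<noteq> 0"
    thus "bi j \<le> bi i + 0 \<and> bi i \<le> bi j + 0" unfolding bdp by (auto split: if_splits)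
  next
    fix k j and u :: ivec
    show "(\<Sum>i\<in>blk nb k. (\<Sum>t\<in>blk nb j. block_diag_part nb Uinv i t * u t)^2) \<le> (1/c)^2 * (\<Sum>t\<in>blk nb j. (u t)^2)"
    proof (cases "k = j")
      case True
      have "(\<Sum>i\<in>blk nb k. (\<Sum>t\<in>blk nb j. block_diag_part nb Uinv i t * u t)^2)
          = (\<Sum>i\<in>blk nb k. (\<Sum>t\<in>blk nb k. Uinv i t * u t)^2)"
        using True by (intro sum.cong refl arg_cong[where f="\<lambda>x. x^2"]) (auto simp: bdp blk_iff)
      also have "\<dots> \<le> (1/c)^2 * (\<Sum>t\<in>blk nb j. (u t)^2)" using Dinv_blk True by simp
      finally show ?thesis .
    next
      case False
      have "(\<Sum>i\<in>blk nb k. (\<Sum>t\<in>blk nb j. block_diag_part nb Uinv i t * u t)^2) = 0"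
        using False by (intro sum.neutral ballI) (auto simp: bdp blk_iff)
      moreover have "0 \<le> (1/c)^2 * (\<Sum>t\<in>blk nb j. (u t)^2)" by (intro mult_nonneg_nonneg sum_nonneg) auto
      ultimately show ?thesis by simp
    qed
  qed
  thus ?thesis by simp
qed

lemma fbS_Uinv: "fbS Uinv (KL / c)"
  unfolding fbS_def
proof (intro allI impI)
  fix R T :: "nat set" and x :: ivec
  assume R: "finite R" and T: "finite T"
  obtain n where Tn: "T \<subseteq> {..<nb n}" using exists_nb[OF T] by blast
  define w where "w i = (\<Sum>j\<in>T. Uinv i j * x j)" for i
  have w0: "w i = 0" if "\<not> i < nb n" for i
    unfolding w_def
  proof (intro sum.neutral ballI)
    fix j assume "j \<in> T"
    hence "bi j < n" using Tn lt_nb_iff by auto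
    moreover have "n \<le> bi i" using that lt_nb_iff by simp
    ultimately show "Uinv i j * x j = 0" using Uinv_zero by simp
  qed
  have msol: "(\<Sum>i<nb n. M s i * w i) = (\<Sum>j\<in>T. Ll s j * x j)" if "s < nb n" for s
  proof -
    have "(\<Sum>i<nb n. M s i * w i) = (\<Sum>j\<in>T. (\<Sum>i<nb n. M s i * Uinv i j) * x j)"
      unfolding w_def by (simp add: sum_swap_l sum_distrib_right mult.assoc)
    also have "\<dots> = (\<Sum>j\<in>T. Ll s j * x j)" using I1 Tn by (intro sum.cong refl) auto
    finally show ?thesis .
  qed
  have "(\<Sum>i\<in>R. (w i)^2) \<le> (\<Sum>i\<in>R \<union> {..<nb n}. (w i)^2)" by (rule sum_mono2) (use R in auto)
  also have "\<dots> = (\<Sum>i<nb n. (w i)^2)"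
    by (rule sum.mono_neutral_right) (use R w0 in auto)
  also have "\<dots> \<le> (\<Sum>s<nb n. (\<Sum>j\<in>T. Ll s j * x j)^2) / c^2"
  proof -
    have "c^2 * (\<Sum>i<nb n. (w i)^2) \<le> (\<Sum>s<nb n. (\<Sum>j\<in>T. Ll s j * x j)^2)"
      by (rule ellE) (use msol in auto)
    thus ?thesis using cpos by (simp add: field_simps)
  qed
  also have "\<dots> \<le> KL^2 * (\<Sum>j\<in>T. (x j)^2) / c^2"
    by (intro divide_right_mono fbSD[OF fbS_Ll] T) auto
  also have "\<dots> = (KL / c)^2 * (\<Sum>j\<in>T. (x j)^2)" by (simp add: power_divide)
  finally show "(\<Sum>i\<in>R. (\<Sum>j\<in>T. Uinv i j * x j)^2) \<le> (KL / c)^2 * (\<Sum>j\<in>T. (x j)^2)"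
    unfolding w_def .
qed

lemma fbS_Linv: "fbS Linv (KUU / c)"
  unfolding fbS_def
proof (intro allI impI)
  fix R T :: "nat set" and x :: ivec
  assume R: "finite R" and T: "finite T"
  obtain n where n: "R \<union> T \<subseteq> {..<nb n}" using exists_nb[of "R \<union> T"] R T by blast
  define N where "N = nb n"
  define x' where "x' j = (if j \<in> T then x j else 0)" for j
  define y where "y s = (\<Sum>j<N. Linv s j * x' j)" for s
  define v where "v i = (\<Sum>s<N. Uinv i s * y s)" for i
  have yT: "y s = (\<Sum>j\<in>T. Linv s j * x j)" for s
  proof -
    have "(\<Sum>j\<in>T. Linv s j * x j) = (\<Sum>j\<in>{..<N} \<inter> T. Linv s j * x j)"
      using n unfolding N_def by (intro sum.cong) auto
    also have "\<dots> = y s" unfolding y_def x'_def by (subst sum.inter_restrict) (auto intro: sum.cong)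
    finally show ?thesis by simp
  qed
  have Mv: "(\<Sum>i<N. M r i * v i) = x' r" if "r < N" for r
  proof -
    have "(\<Sum>i<N. M r i * v i) = (\<Sum>s<N. (\<Sum>i<N. M r i * Uinv i s) * y s)"
      unfolding v_def by (simp add: sum_swap_l sum_distrib_right mult.assoc)
    also have "\<dots> = (\<Sum>s<N. Ll r s * y s)" using I1 unfolding N_def by (intro sum.cong refl) auto
    also have "\<dots> = (\<Sum>j<N. (\<Sum>s<N. Ll r s * Linv s j) * x' j)"
      unfolding y_def by (simp add: sum_swap_l sum_distrib_right mult.assoc)
    also have "\<dots> = (\<Sum>j<N. if j = r then x' j else 0)"
      using I4 that unfolding isinv_def N_def by (intro sum.cong refl) auto
    also have "\<dots> = x' r" using that by simp
    finally show ?thesis .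
  qed
  have Uv: "(\<Sum>t<N. Uu i t * v t) = y i" if "i < N" for i
  proof -
    have "(\<Sum>t<N. Uu i t * v t) = (\<Sum>s<N. (\<Sum>t<N. Uu i t * Uinv t s) * y s)"
      unfolding v_def by (simp add: sum_swap_l sum_distrib_right mult.assoc)
    also have "\<dots> = (\<Sum>s<N. if s = i then y s else 0)"
      using I5 that unfolding isinv_def N_def by (intro sum.cong refl) auto
    also have "\<dots> = y i" using that by simp
    finally show ?thesis .
  qed
  have vb: "c^2 * (\<Sum>i<N. (v i)^2) \<le> (\<Sum>r<N. (x' r)^2)" by (rule ellE) (use Mv in auto)
  have x'N: "(\<Sum>r<N. (x' r)^2) = (\<Sum>j\<in>T. (x j)^2)"
  proof -
    have "(\<Sum>r<N. (x' r)^2) = (\<Sum>r<N. if r \<in> T then (x r)^2 else 0)"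
      unfolding x'_def by (intro sum.cong) auto
    also have "\<dots> = (\<Sum>r\<in>{..<N} \<inter> T. (x r)^2)" by (subst sum.inter_restrict) auto
    also have "{..<N} \<inter> T = T" using n unfolding N_def by auto
    finally show ?thesis .
  qed
  have "(\<Sum>i\<in>R. (\<Sum>j\<in>T. Linv i j * x j)^2) = (\<Sum>i\<in>R. (y i)^2)" by (simp add: yT)
  also have "\<dots> \<le> (\<Sum>i<N. (y i)^2)" by (rule sum_mono2) (use n in \<open>auto simp: N_def\<close>)
  also have "\<dots> = (\<Sum>i<N. (\<Sum>t<N. Uu i t * v t)^2)" by (intro sum.cong refl) (simp add: Uv)
  also have "\<dots> \<le> KUU^2 * (\<Sum>t<N. (v t)^2)" by (rule fbSD[OF fbS_Uu]) auto
  also have "\<dots> \<le> KUU^2 * ((\<Sum>j\<in>T. (x j)^2) / c^2)"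
    using vb cpos x'N by (intro mult_left_mono) (auto simp: field_simps)
  also have "\<dots> = (KUU / c)^2 * (\<Sum>j\<in>T. (x j)^2)" by (simp add: power_divide)
  finally show "(\<Sum>i\<in>R. (\<Sum>j\<in>T. Linv i j * x j)^2) \<le> (KUU / c)^2 * (\<Sum>j\<in>T. (x j)^2)" .
qed

end

lemma mv_row: "(\<And>j. m \<le> j \<Longrightarrow> A i j = 0) \<Longrightarrow> mv A x i = (\<Sum>j<m. A i j * x j)"
  unfolding mv_def by (rule suminf_finite) auto

lemma in_l2_diff: "in_l2 x \<Longrightarrow> in_l2 y \<Longrightarrow> in_l2 (\<lambda>i. x i - y i)"
  unfolding in_l2_def
proof (rule summable_comparison_test')
  assume "summable (\<lambda>i. (x i)^2)" "summable (\<lambda>i. (y i)^2)"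
  thus "summable (\<lambda>i. 2 * (x i)^2 + 2 * (y i)^2)" by (intro summable_add summable_mult)
  show "norm ((x i - y i)^2) \<le> 2 * (x i)^2 + 2 * (y i)^2" for i using sq_diff_le by simp
qed

lemma ell_fin:
  assumes "elliptic_l2 M"
  shows "\<exists>c>0. \<forall>N x. c * (\<Sum>j<N. (x j)^2) \<le> (\<Sum>i<N. x i * (\<Sum>j<N. M i j * x j))"
proof -
  obtain c where c: "c > 0" "\<And>x. in_l2 x \<Longrightarrow> l2inner (mv M x) x \<ge> c * (l2norm x)^2"
    using assms unfolding elliptic_l2_def by blast
  have "c * (\<Sum>j<N. (x j)^2) \<le> (\<Sum>i<N. x i * (\<Sum>j<N. M i j * x j))" for N x
  proof -
    define x' where "x' j = (if j < N then x j else 0)" for j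
    have x'l: "in_l2 x'" unfolding in_l2_def
      by (rule summable_finite[of "{..<N}"]) (auto simp: x'_def)
    have mvx: "mv M x' i = (\<Sum>j<N. M i j * x j)" for i
      by (subst mv_fin[of "{..<N}"]) (auto simp: x'_def)
    have "l2inner (mv M x') x' = (\<Sum>i<N. x i * (\<Sum>j<N. M i j * x j))"
      unfolding l2inner_def mvx by (subst suminf_finite[of "{..<N}"]) (auto simp: x'_def mult.commute)
    moreover have "(l2norm x')^2 = (\<Sum>j<N. (x j)^2)"
      by (subst l2norm_sq[OF x'l], subst suminf_finite[of "{..<N}"]) (auto simp: x'_def)
    ultimately show ?thesis using c(2)[OF x'l] by simp
  qed
  thus ?thesis using c(1) by blast
qed

context bstr begin

lemma inv_apply:
  assumes "\<And>j. N \<le> j \<Longrightarrow> A i j = 0" "\<And>s j. s < N \<Longrightarrow> N \<le> j \<Longrightarrow> B s j = 0"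
    "isinv N A B" "i < N"
  shows "mv A (mv B x) i = x i"
proof -
  have "mv A (mv B x) i = (\<Sum>s<N. A i s * mv B x s)" by (rule mv_row) (use assms(1) in auto)
  also have "\<dots> = (\<Sum>s<N. A i s * (\<Sum>j<N. B s j * x j))"
    by (intro sum.cong refl arg_cong[where f="\<lambda>t. A i _ * t"] mv_row) (use assms(2) in auto)
  also have "\<dots> = (\<Sum>j<N. (\<Sum>s<N. A i s * B s j) * x j)"
    by (simp add: sum_swap_l sum_distrib_right mult.assoc)
  also have "\<dots> = (\<Sum>j<N. if j = i then x j else 0)"
    using assms(3,4) unfolding isinv_def by (intro sum.cong refl) auto
  also have "\<dots> = x i" using assms(4) by simp
  finally show ?thesis .
qed

lemma blk_ell:
  assumes fb: "fbS A K" and diag: "\<And>i j. A i j \<noteq> 0 \<Longrightarrow> bi i = bi j" and e: "e > 0"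
  and be: "\<And>k u. e * (\<Sum>i\<in>blk nb k. (u i)^2) \<le> (\<Sum>i\<in>blk nb k. u i * (\<Sum>t\<in>blk nb k. A i t * u t))"
  shows "elliptic_l2 A"
  unfolding elliptic_l2_def
proof (intro exI[of _ e] conjI allI impI e)
  fix x assume xl: "in_l2 x"
  have bA: "bounded_l2 A" by (rule fbS_bounded[OF fb])
  hence yl: "in_l2 (mv A x)" using xl unfolding bounded_l2_def by blast
  define f where "f i = mv A x i * x i" for i
  have fs: "summable f" unfolding f_def
    using yl xl unfolding in_l2_def by (rule summable_prod_l2)
  have mvr: "mv A x i = (\<Sum>t\<in>blk nb (bi i). A i t * x t)" for i
    unfolding mv_def
  proof (rule suminf_finite)
    fix t assume "t \<notin> blk nb (bi i)"
    hence "bi t \<noteq> bi i" by (simp add: blk_iff)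
    hence "A i t = 0" using diag[of i t] by auto
    thus "A i t * x t = 0" by simp
  qed (rule blk_fin)
  have xs: "summable (\<lambda>i. (x i)^2)" using xl unfolding in_l2_def .
  have part: "e * (\<Sum>i<nb n. (x i)^2) \<le> (\<Sum>i<nb n. f i)" for n
  proof -
    have "e * (\<Sum>i<nb n. (x i)^2) = (\<Sum>k<n. e * (\<Sum>i\<in>blk nb k. (x i)^2))"
      by (simp add: sum_blocks sum_distrib_left)
    also have "\<dots> \<le> (\<Sum>k<n. \<Sum>i\<in>blk nb k. x i * (\<Sum>t\<in>blk nb k. A i t * x t))"
      by (intro sum_mono be)
    also have "\<dots> = (\<Sum>k<n. \<Sum>i\<in>blk nb k. f i)"
      unfolding f_def by (intro sum.cong refl) (auto simp: mvr blk_iff mult.commute)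
    also have "\<dots> = (\<Sum>i<nb n. f i)" by (simp add: sum_blocks)
    finally show ?thesis .
  qed
  have l1: "(\<lambda>n. e * (\<Sum>i<nb n. (x i)^2)) \<longlonglongrightarrow> e * (\<Sum>i. (x i)^2)"
    using LIMSEQ_subseq_LIMSEQ[OF summable_LIMSEQ[OF xs] smono]
    by (intro tendsto_mult_left) (simp add: o_def)
  have l2: "(\<lambda>n. (\<Sum>i<nb n. f i)) \<longlonglongrightarrow> suminf f"
    using LIMSEQ_subseq_LIMSEQ[OF summable_LIMSEQ[OF fs] smono] by (simp add: o_def)
  have "e * (\<Sum>i. (x i)^2) \<le> suminf f"
    by (rule LIMSEQ_le[OF l1 l2]) (use part in auto)
  thus "e * (l2norm x)^2 \<le> l2inner (mv A x) x"
    unfolding l2norm_sq[OF xl] l2inner_def f_def .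
qed

end

locale lu2 = lu nb M b0 c Cm for nb M b0 c Cm +
  assumes bM: "bounded_l2 M" and eM: "elliptic_l2 M"
begin

lemma mmul_eq: "mmul Ll Uu = M"
proof (intro ext)
  fix i j
  have "mmul Ll Uu i j = (\<Sum>s<nb (Suc (bi i)). Ll i s * Uu s j)"
    unfolding mmul_def
  proof (rule suminf_finite)
    fix s assume "s \<notin> {..<nb (Suc (bi i))}"
    hence "bi i < bi s" using lt_nb_iff by simp
    thus "Ll i s * Uu s j = 0" using Ll_unit[of i s] by auto
  qed simp
  also have "\<dots> = M i j" by (rule I7) (rule bix_lt)
  finally show "mmul Ll Uu i j = M i j" .
qed

lemma Ll_Linv: "mv Ll (mv Linv x) = x"
proof
  fix i
  show "mv Ll (mv Linv x) i = x i"
  proof (rule inv_apply[where N="nb (Suc (bi i))"])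
    show "Ll i j = 0" if "nb (Suc (bi i)) \<le> j" for j
    proof -
      have "\<not> bi j < Suc (bi i)" using that lt_nb_iff[of j "Suc (bi i)"] by simp
      hence "bi i < bi j" by simp
      thus ?thesis using Ll_unit[of i j] by auto
    qed
    show "Linv s j = 0" if "s < nb (Suc (bi i))" "nb (Suc (bi i)) \<le> j" for s j
    proof -
      have "bi s < bi j" using that lt_nb_iff[of s "Suc (bi i)"] lt_nb_iff[of j "Suc (bi i)"] by simp
      thus ?thesis by (rule Linv_zero)
    qed
  qed (rule I4, rule bix_lt)
qed

lemma Linv_Ll: "mv Linv (mv Ll x) = x"
proof
  fix i
  show "mv Linv (mv Ll x) i = x i"
  proof (rule inv_apply[where N="nb (Suc (bi i))"])
    show "Linv i j = 0" if "nb (Suc (bi i)) \<le> j" for j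
    proof -
      have "\<not> bi j < Suc (bi i)" using that lt_nb_iff[of j "Suc (bi i)"] by simp
      hence "bi i < bi j" by simp
      thus ?thesis by (rule Linv_zero)
    qed
    show "Ll s j = 0" if "s < nb (Suc (bi i))" "nb (Suc (bi i)) \<le> j" for s j
    proof -
      have "bi s < bi j" using that lt_nb_iff[of s "Suc (bi i)"] lt_nb_iff[of j "Suc (bi i)"] by simp
      thus ?thesis using Ll_unit[of s j] by auto
    qed
  qed (rule I3, rule bix_lt)
qed

abbreviation "D \<equiv> block_diag_part nb Uu"
abbreviation "Dinv \<equiv> block_diag_part nb Uinv"

lemma blkI5: "s \<in> blk nb k \<Longrightarrow> r \<in> blk nb k \<Longrightarrow> (\<Sum>t\<in>blk nb k. Uu s t * Uinv t r) = (if s = r then 1 else 0)"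
proof -
  assume s: "s \<in> blk nb k" and r: "r \<in> blk nb k"
  have "(\<Sum>t<nb (Suc k). Uu s t * Uinv t r) = (\<Sum>t\<in>blk nb k. Uu s t * Uinv t r)"
  proof (rule sum.mono_neutral_right)
    show "\<forall>t\<in>{..<nb (Suc k)} - blk nb k. Uu s t * Uinv t r = 0"
    proof
      fix t assume "t \<in> {..<nb (Suc k)} - blk nb k"
      hence "bi t < bi s" using s lt_nb_iff blk_iff by auto
      thus "Uu s t * Uinv t r = 0" using Uu_upper by simp
    qed
  qed (use blk_sub in auto)
  moreover have "(\<Sum>t<nb (Suc k). Uu s t * Uinv t r) = (if s = r then 1 else 0)"
    using I5[of "Suc k"] s r blk_sub unfolding isinv_def by blast
  ultimately show ?thesis by simp
qed

lemma blkI6: "s \<in> blk nb k \<Longrightarrow> r \<in> blk nb k \<Longrightarrow> (\<Sum>t\<in>blk nb k. Uinv s t * Uu t r) = (if s = r then 1 else 0)"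
proof -
  assume s: "s \<in> blk nb k" and r: "r \<in> blk nb k"
  have "(\<Sum>t<nb (Suc k). Uinv s t * Uu t r) = (\<Sum>t\<in>blk nb k. Uinv s t * Uu t r)"
  proof (rule sum.mono_neutral_right)
    show "\<forall>t\<in>{..<nb (Suc k)} - blk nb k. Uinv s t * Uu t r = 0"
    proof
      fix t assume "t \<in> {..<nb (Suc k)} - blk nb k"
      hence "bi t < bi s" using s lt_nb_iff blk_iff by auto
      thus "Uinv s t * Uu t r = 0" using Uinv_zero by simp
    qed
  qed (use blk_sub in auto)
  moreover have "(\<Sum>t<nb (Suc k). Uinv s t * Uu t r) = (if s = r then 1 else 0)"
    using I6[of "Suc k"] s r blk_sub unfolding isinv_def by blast
  ultimately show ?thesis by simp
qed

lemma isinv_D: "isinv (nb n) D Dinv"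
  unfolding isinv_def
proof (intro allI impI)
  fix i j assume i: "i < nb n" and j: "j < nb n"
  show "(\<Sum>s<nb n. D i s * Dinv s j) = (if i = j then 1 else 0)"
  proof (cases "bi i = bi j")
    case False
    hence "(\<Sum>s<nb n. D i s * Dinv s j) = 0" by (intro sum.neutral) (auto simp: bdp)
    thus ?thesis using False by auto
  next
    case True
    have "(\<Sum>s<nb n. D i s * Dinv s j) = (\<Sum>s<nb n. Uu i s * Uinv s j)"
    proof (rule sum.cong[OF refl])
      fix s
      show "D i s * Dinv s j = Uu i s * Uinv s j"
      proof (cases "bi s = bi i")
        case False
        hence "bi s < bi i \<or> bi s > bi j" using True by auto
        hence "Uu i s * Uinv s j = 0" using Uu_upper[of s i] Uinv_zero[of j s] by auto
        moreover have "D i s = 0" using False by (simp add: bdp)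
        ultimately show ?thesis by simp
      qed (use True in \<open>simp add: bdp\<close>)
    qed
    also have "\<dots> = (if i = j then 1 else 0)" by (rule I5[of n, unfolded isinv_def, rule_format, OF i j])
    finally show ?thesis .
  qed
qed

lemma D_row: "nb (Suc (bi i)) \<le> j \<Longrightarrow> block_diag_part nb A i j = 0"
proof -
  assume "nb (Suc (bi i)) \<le> j"
  hence "\<not> bi j < Suc (bi i)" using lt_nb_iff[of j "Suc (bi i)"] by simp
  hence "bi i \<noteq> bi j" by simp
  thus ?thesis by (simp add: bdp)
qed

lemma D_col: "s < nb (Suc (bi i)) \<Longrightarrow> nb (Suc (bi i)) \<le> j \<Longrightarrow> block_diag_part nb A s j = 0"
proof -
  assume "s < nb (Suc (bi i))" "nb (Suc (bi i)) \<le> j"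
  hence "bi s < Suc (bi i)" "\<not> bi j < Suc (bi i)" using lt_nb_iff[of s "Suc (bi i)"] lt_nb_iff[of j "Suc (bi i)"] by simp_all
  hence "bi s \<noteq> bi j" by simp
  thus ?thesis by (simp add: bdp)
qed

lemma D_Dinv: "mv D (mv Dinv x) = x"
proof
  fix i
  show "mv D (mv Dinv x) i = x i"
    by (rule inv_apply[where N="nb (Suc (bi i))"])
      (erule D_row, erule (1) D_col, rule isinv_D, rule bix_lt)
qed

lemma Dinv_D: "mv Dinv (mv D x) = x"
proof
  fix i
  show "mv Dinv (mv D x) i = x i"
    by (rule inv_apply[where N="nb (Suc (bi i))"])
      (erule D_row, erule (1) D_col, rule isinv_sym[OF isinv_D], rule bix_lt)
qed

end

context lu2 begin

lemma KU_pos: "KU > 0" unfolding KU_def using Cm1 cpos by (simp add: add_pos_nonneg)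

lemma bUinv: "bounded_l2 Uinv" by (rule fbS_bounded[OF fbS_Uinv])
lemma bUu: "bounded_l2 Uu" by (rule fbS_bounded[OF fbS_Uu])

lemma Uu_row: "nb (Suc (bi i + b0)) \<le> s \<Longrightarrow> Uu i s = 0"
proof -
  assume "nb (Suc (bi i + b0)) \<le> s"
  hence "\<not> bi s < Suc (bi i + b0)" using lt_nb_iff[of s "Suc (bi i + b0)"] by simp
  hence "bi s > bi i + b0" by simp
  thus ?thesis by (rule Uu_band)
qed

lemma UuUinv_entry: "(\<Sum>s<nb (Suc (bi i + b0)). Uu i s * Uinv s j) = (if i = j then 1 else 0)"
proof -
  define n where "n = Suc (bi i + b0 + bi j)"
  have le: "nb (Suc (bi i + b0)) \<le> nb n" unfolding n_def using nb_le_iff by simp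
  have "(\<Sum>s<nb n. Uu i s * Uinv s j) = (\<Sum>s<nb (Suc (bi i + b0)). Uu i s * Uinv s j)"
    by (rule sum_ext[OF le]) (simp add: Uu_row)
  moreover have "i < nb n" "j < nb n" unfolding n_def lt_nb_iff by simp_all
  ultimately show ?thesis using I5[of n, unfolded isinv_def, rule_format] by simp
qed

lemma Uu_Uinv: "in_l2 y \<Longrightarrow> mv Uu (mv Uinv y) = y"
proof
  fix i assume yl: "in_l2 y"
  have sm: "summable (\<lambda>j. Uinv s j * y j)" for s using bUinv yl unfolding bounded_l2_def by blast
  define N where "N = nb (Suc (bi i + b0))"
  have "mv Uu (mv Uinv y) i = (\<Sum>s<N. Uu i s * mv Uinv y s)"
    by (rule mv_row) (simp add: Uu_row N_def)
  also have "\<dots> = (\<Sum>s<N. (\<Sum>j. Uu i s * (Uinv s j * y j)))"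
    unfolding mv_def by (intro sum.cong refl suminf_mult[symmetric] sm)
  also have "\<dots> = (\<Sum>j. \<Sum>s<N. Uu i s * (Uinv s j * y j))"
    by (rule suminf_sum[symmetric]) (intro summable_mult sm)
  also have "\<dots> = (\<Sum>j. if j = i then y j else 0)"
  proof (rule arg_cong[where f=suminf], rule ext)
    fix j
    have "(\<Sum>s<N. Uu i s * (Uinv s j * y j)) = (\<Sum>s<N. Uu i s * Uinv s j) * y j"
      by (simp add: sum_distrib_right mult.assoc)
    also have "\<dots> = (if j = i then y j else 0)" unfolding N_def UuUinv_entry by auto
    finally show "(\<Sum>s<N. Uu i s * (Uinv s j * y j)) = (if j = i then y j else 0)" .
  qed
  also have "\<dots> = y i" by (subst suminf_finite[of "{i}"]) auto
  finally show "mv Uu (mv Uinv y) i = y i" .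
qed

lemma Uu_inj:
  assumes dl: "in_l2 d" and z: "\<And>i. mv Uu d i = 0"
  shows "d = (\<lambda>_. 0)"
proof -
  have smM: "summable (\<lambda>t. M s t * d t)" for s using bM dl unfolding bounded_l2_def by blast
  have eq: "mv Uu d i = mv Linv (mv M d) i" for i
  proof -
    define Ns where "Ns = nb (Suc (bi i))"
    have "mv Uu d i = (\<Sum>t. \<Sum>s<Ns. Linv i s * (M s t * d t))"
      unfolding mv_def Uu_def Ns_def by (simp add: sum_distrib_right mult.assoc)
    also have "\<dots> = (\<Sum>s<Ns. \<Sum>t. Linv i s * (M s t * d t))"
      by (rule suminf_sum) (intro summable_mult smM)
    also have "\<dots> = (\<Sum>s<Ns. Linv i s * mv M d s)"
      unfolding mv_def by (intro sum.cong refl suminf_mult smM)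
    also have "\<dots> = mv Linv (mv M d) i"
      by (rule mv_row[symmetric]) (simp add: Linv_out Ns_def)
    finally show ?thesis .
  qed
  have "mv M d = mv Ll (mv Linv (mv M d))" by (rule Ll_Linv[symmetric])
  also have "mv Linv (mv M d) = (\<lambda>_. 0)" using eq z by (intro ext) metis
  also have "mv Ll (\<lambda>_. 0) = (\<lambda>_. 0)" unfolding mv_def by simp
  finally have Md: "mv M d = (\<lambda>_. 0)" .
  obtain c' where c': "c' > 0" "\<And>x. in_l2 x \<Longrightarrow> l2inner (mv M x) x \<ge> c' * (l2norm x)^2"
    using eM unfolding elliptic_l2_def by blast
  have "c' * (l2norm d)^2 \<le> 0" using c'(2)[OF dl] unfolding Md l2inner_def by simp
  hence "(l2norm d)^2 \<le> 0" using c'(1) by (simp add: mult_le_0_iff)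
  moreover have "0 \<le> (\<Sum>i. (d i)^2)" using dl unfolding in_l2_def by (intro suminf_nonneg) auto
  ultimately have "(\<Sum>i. (d i)^2) = 0" using l2norm_sq[OF dl] by simp
  hence "\<forall>i. (d i)^2 = 0" using dl unfolding in_l2_def by (subst (asm) suminf_eq_zero_iff) auto
  thus ?thesis by auto
qed

lemma Uinv_Uu: "in_l2 y \<Longrightarrow> mv Uinv (mv Uu y) = y"
proof -
  assume yl: "in_l2 y"
  define w where "w = mv Uu y"
  have wl: "in_l2 w" using bUu yl unfolding bounded_l2_def w_def by blast
  define z where "z = mv Uinv w"
  have zl: "in_l2 z" using bUinv wl unfolding bounded_l2_def z_def by blast
  have Uz: "mv Uu z = w" unfolding z_def by (rule Uu_Uinv[OF wl])
  define d where "d i = z i - y i" for i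
  have dl: "in_l2 d" unfolding d_def by (rule in_l2_diff[OF zl yl])
  have "mv Uu d i = 0" for i
  proof -
    define N where "N = nb (Suc (bi i + b0))"
    have r: "mv Uu v i = (\<Sum>s<N. Uu i s * v s)" for v by (rule mv_row) (simp add: Uu_row N_def)
    have "mv Uu d i = mv Uu z i - mv Uu y i"
      unfolding r d_def by (simp add: right_diff_distrib sum_subtractf)
    thus ?thesis using Uz unfolding w_def by simp
  qed
  hence "d = (\<lambda>_. 0)" by (rule Uu_inj[OF dl])
  hence "z = y"
  proof -
    assume h: "d = (\<lambda>_. 0)"
    show "z = y"
    proof
      fix i show "z i = y i" using fun_cong[OF h, of i] unfolding d_def by simp
    qed
  qed
  thus ?thesis unfolding z_def w_def .
qed

lemma Dblk: "c * (\<Sum>i\<in>blk nb k. (u i)^2) \<le> (\<Sum>i\<in>blk nb k. u i * (\<Sum>t\<in>blk nb k. Uu i t * u t))"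
proof -
  define y where "y r = (\<Sum>t\<in>blk nb k. Uu r t * u t)" for r
  define z where "z s = (\<Sum>t\<in>blk nb k. Uinv s t * y t)" for s
  define N where "N = nb (Suc k)"
  have zu: "z s = u s" if s: "s \<in> blk nb k" for s
  proof -
    have "z s = (\<Sum>r\<in>blk nb k. (\<Sum>t\<in>blk nb k. Uinv s t * Uu t r) * u r)"
      unfolding z_def y_def by (simp add: sum_swap_l sum_distrib_right mult.assoc)
    also have "\<dots> = (\<Sum>r\<in>blk nb k. if r = s then u r else 0)"
      by (intro sum.cong refl) (use s blkI6 in auto)
    also have "\<dots> = u s" using s blk_fin by simp
    finally show ?thesis .
  qed
  have Mz: "(\<Sum>s<N. M r s * z s) = (if r \<in> blk nb k then y r else 0)" if r: "r < N" for r
  proof -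
    have "(\<Sum>s<N. M r s * z s) = (\<Sum>t\<in>blk nb k. (\<Sum>s<N. M r s * Uinv s t) * y t)"
      unfolding z_def by (simp add: sum_swap_l sum_distrib_right mult.assoc)
    also have "\<dots> = (\<Sum>t\<in>blk nb k. if t = r then y t else 0)"
    proof (intro sum.cong refl)
      fix t assume t: "t \<in> blk nb k"
      hence tN: "t < nb (Suc k)" using blk_sub by auto
      have "bi r \<le> bi t" using r t lt_nb_iff[of r "Suc k"] blk_iff unfolding N_def by auto
      hence "Ll r t = (if r = t then 1 else 0)" by (rule Ll_unit)
      moreover have "(\<Sum>s<N. M r s * Uinv s t) = Ll r t" unfolding N_def by (rule I1[OF tN])
      ultimately show "(\<Sum>s<N. M r s * Uinv s t) * y t = (if t = r then y t else 0)" by auto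
    qed
    also have "\<dots> = (if r \<in> blk nb k then y r else 0)" using blk_fin by simp
    finally show ?thesis .
  qed
  have "c * (\<Sum>i\<in>blk nb k. (u i)^2) = c * (\<Sum>i\<in>blk nb k. (z i)^2)" by (simp add: zu)
  also have "\<dots> \<le> c * (\<Sum>i<N. (z i)^2)"
    using cpos by (intro mult_left_mono sum_mono2) (auto simp: N_def dest: subsetD[OF blk_sub])
  also have "\<dots> \<le> (\<Sum>i<N. z i * (\<Sum>j<N. M i j * z j))" by (rule ell)
  also have "\<dots> = (\<Sum>i<N. if i \<in> blk nb k then z i * y i else 0)"
    by (intro sum.cong refl) (simp add: Mz)
  also have "\<dots> = (\<Sum>i\<in>blk nb k. z i * y i)" unfolding N_def by (rule sum_blk_if[OF blk_sub])
  also have "\<dots> = (\<Sum>i\<in>blk nb k. u i * (\<Sum>t\<in>blk nb k. Uu i t * u t))"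
    by (intro sum.cong refl) (simp add: zu y_def)
  finally show ?thesis .
qed

lemma Dinvblk: "(c / KU^2) * (\<Sum>i\<in>blk nb k. (u i)^2) \<le> (\<Sum>i\<in>blk nb k. u i * (\<Sum>t\<in>blk nb k. Uinv i t * u t))"
proof -
  define y where "y i = (\<Sum>t\<in>blk nb k. Uinv i t * u t)" for i
  have Uy: "(\<Sum>i\<in>blk nb k. Uu r i * y i) = u r" if r: "r \<in> blk nb k" for r
  proof -
    have "(\<Sum>i\<in>blk nb k. Uu r i * y i) = (\<Sum>t\<in>blk nb k. (\<Sum>i\<in>blk nb k. Uu r i * Uinv i t) * u t)"
      unfolding y_def by (simp add: sum_swap_l sum_distrib_right mult.assoc)
    also have "\<dots> = (\<Sum>t\<in>blk nb k. if t = r then u t else 0)"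
      by (intro sum.cong refl) (use r blkI5 in auto)
    also have "\<dots> = u r" using r blk_fin by simp
    finally show ?thesis .
  qed
  have "(\<Sum>r\<in>blk nb k. (u r)^2) = (\<Sum>r\<in>blk nb k. (\<Sum>i\<in>blk nb k. Uu r i * y i)^2)"
    by (intro sum.cong refl) (simp add: Uy)
  also have "\<dots> \<le> KU^2 * (\<Sum>i\<in>blk nb k. (y i)^2)" by (rule Uu_blockb)
  finally have u2: "(\<Sum>r\<in>blk nb k. (u r)^2) \<le> KU^2 * (\<Sum>i\<in>blk nb k. (y i)^2)" .
  have "c * (\<Sum>i\<in>blk nb k. (y i)^2) \<le> (\<Sum>i\<in>blk nb k. y i * (\<Sum>t\<in>blk nb k. Uu i t * y t))"
    by (rule Dblk)
  also have "\<dots> = (\<Sum>i\<in>blk nb k. u i * y i)" by (intro sum.cong refl) (simp add: Uy)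
  finally have cy: "c * (\<Sum>i\<in>blk nb k. (y i)^2) \<le> (\<Sum>i\<in>blk nb k. u i * y i)" .
  have "(c / KU^2) * (\<Sum>i\<in>blk nb k. (u i)^2) \<le> (c / KU^2) * (KU^2 * (\<Sum>i\<in>blk nb k. (y i)^2))"
    using cpos KU_pos by (intro mult_left_mono u2) auto
  also have "\<dots> = c * (\<Sum>i\<in>blk nb k. (y i)^2)" using KU_pos by simp
  also have "\<dots> \<le> (\<Sum>i\<in>blk nb k. u i * y i)" by (rule cy)
  finally show ?thesis unfolding y_def .
qed

lemma ell_D: "elliptic_l2 D"
proof (rule blk_ell[OF fbS_D _ cpos])
  fix i j assume "D i j \<noteq> 0" thus "bi i = bi j" by (auto simp: bdp split: if_splits)
next
  fix k and u :: ivec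
  have inner: "(\<Sum>t\<in>blk nb k. D i t * u t) = (\<Sum>t\<in>blk nb k. Uu i t * u t)" if "i \<in> blk nb k" for i
  proof (rule sum.cong[OF refl])
    fix t assume "t \<in> blk nb k"
    hence "bi t = bi i" using that blk_iff by simp
    thus "D i t * u t = Uu i t * u t" by (simp add: bdp)
  qed
  have "(\<Sum>i\<in>blk nb k. u i * (\<Sum>t\<in>blk nb k. D i t * u t)) = (\<Sum>i\<in>blk nb k. u i * (\<Sum>t\<in>blk nb k. Uu i t * u t))"
    by (rule sum.cong[OF refl]) (simp add: inner)
  thus "c * (\<Sum>i\<in>blk nb k. (u i)^2) \<le> (\<Sum>i\<in>blk nb k. u i * (\<Sum>t\<in>blk nb k. D i t * u t))"
    using Dblk by simp
qed

lemma ell_Dinv: "elliptic_l2 Dinv"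
proof (rule blk_ell[OF fbS_Dinv])
  fix i j assume "Dinv i j \<noteq> 0" thus "bi i = bi j" by (auto simp: bdp split: if_splits)
next
  show "c / KU^2 > 0" using cpos KU_pos by simp
next
  fix k and u :: ivec
  have inner: "(\<Sum>t\<in>blk nb k. Dinv i t * u t) = (\<Sum>t\<in>blk nb k. Uinv i t * u t)" if "i \<in> blk nb k" for i
  proof (rule sum.cong[OF refl])
    fix t assume "t \<in> blk nb k"
    hence "bi t = bi i" using that blk_iff by simp
    thus "Dinv i t * u t = Uinv i t * u t" by (simp add: bdp)
  qed
  have "(\<Sum>i\<in>blk nb k. u i * (\<Sum>t\<in>blk nb k. Dinv i t * u t)) = (\<Sum>i\<in>blk nb k. u i * (\<Sum>t\<in>blk nb k. Uinv i t * u t))"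
    by (rule sum.cong[OF refl]) (simp add: inner)
  thus "c / KU^2 * (\<Sum>i\<in>blk nb k. (u i)^2) \<le> (\<Sum>i\<in>blk nb k. u i * (\<Sum>t\<in>blk nb k. Dinv i t * u t))"
    using Dinvblk by simp
qed

end

theorem lemma3p7:
  fixes M :: imat and nb :: "nat \<Rightarrow> nat" and b0 :: nat
  assumes "bounded_l2 M"
    and "elliptic_l2 M"
    and "block_structure nb"
    and "block_banded nb b0 M"
  shows "\<exists>L U. M = mmul L U
     \<and> block_lower nb L \<and> block_upper nb U \<and> unit_block_diag nb L
     \<and> block_banded nb b0 L \<and> block_banded nb b0 U
     \<and> bounded_l2 L \<and> bounded_l2 U
     \<and> (\<exists>Linv. bounded_l2 Linv \<and> l2_inverse L Linv)
     \<and> (\<exists>Uinv. bounded_l2 Uinv \<and> l2_inverse U Uinv)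
     \<and> bounded_l2 (block_diag_part nb U) \<and> elliptic_l2 (block_diag_part nb U)
     \<and> (\<exists>Dinv. l2_inverse (block_diag_part nb U) Dinv \<and> bounded_l2 Dinv \<and> elliptic_l2 Dinv)"
proof -
  have nb0: "nb 0 = 0" and sm: "strict_mono nb" using assms(3) unfolding block_structure_def by auto
  interpret B: bstr nb by unfold_locales (rule nb0, rule sm)
  obtain c where c: "c > 0" "\<And>N x. c * (\<Sum>j<N. (x j)^2) \<le> (\<Sum>i<N. x i * (\<Sum>j<N. M i j * x j))"
    using ell_fin[OF assms(2)] by blast
  obtain K where K: "fbS M K" using bounded_fbS[OF assms(1)] by blast
  define Cm where "Cm = \<bar>K\<bar> + 1"
  have fbM: "fbS M Cm"
  proof (rule fbS_mono[OF K])
    have "\<bar>K\<bar> \<le> Cm" unfolding Cm_def by simp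
    hence "\<bar>K\<bar>^2 \<le> Cm^2" by (intro power_mono) auto
    thus "K^2 \<le> Cm^2" by simp
  qed
  have band: "bix nb j \<le> bix nb i + b0 \<and> bix nb i \<le> bix nb j + b0" if "M i j \<noteq> 0" for i j
  proof (rule ccontr)
    assume "\<not> (bix nb j \<le> bix nb i + b0 \<and> bix nb i \<le> bix nb j + b0)"
    hence "bix nb i > bix nb j + b0 \<or> bix nb j > bix nb i + b0" by auto
    hence "block_zero nb M (bix nb i) (bix nb j)" using assms(4) unfolding block_banded_def by blast
    hence "M i j = 0" unfolding B.block_zero_iff by blast
    with that show False by simp
  qed
  interpret L: lu2 nb M b0 c Cm
  proof unfold_locales
    show "\<And>i j. M i j \<noteq> 0 \<Longrightarrow> bix nb j \<le> bix nb i + b0 \<and> bix nb i \<le> bix nb j + b0" by (rule band)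
    show "c > 0" by (rule c(1))
    show "\<And>N x. c * (\<Sum>j<N. (x j)^2) \<le> (\<Sum>i<N. x i * (\<Sum>j<N. M i j * x j))" by (rule c(2))
    show "fbS M Cm" by (rule fbM)
    show "Cm \<ge> 1" unfolding Cm_def by simp
    show "bounded_l2 M" by (rule assms(1))
    show "elliptic_l2 M" by (rule assms(2))
  qed
  show ?thesis
  proof (intro exI conjI)
    show "M = mmul L.Ll L.Uu" by (rule L.mmul_eq[symmetric])
    show "block_lower nb L.Ll" unfolding block_lower_def B.block_zero_iff
    proof (intro allI impI)
      fix i j r s assume "i < j" "bix nb r = i" "bix nb s = j"
      thus "L.Ll r s = 0" using L.Ll_unit[of r s] by auto
    qed
    show "block_upper nb L.Uu" unfolding block_upper_def B.block_zero_iff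
    proof (intro allI impI)
      fix i j r s assume "i > j" "bix nb r = i" "bix nb s = j"
      thus "L.Uu r s = 0" using L.Uu_upper[of s r] by auto
    qed
    show "unit_block_diag nb L.Ll" unfolding unit_block_diag_def
    proof (intro allI ballI)
      fix i r s assume "r \<in> blk nb i" "s \<in> blk nb i"
      hence "bix nb r = bix nb s" using B.blk_iff by simp
      thus "L.Ll r s = (if r = s then 1 else 0)" using L.Ll_unit[of r s] by simp
    qed
    show "block_banded nb b0 L.Ll" unfolding block_banded_def B.block_zero_iff
    proof (intro allI impI)
      fix i j r s assume h: "i > j + b0 \<or> j > i + b0" "bix nb r = i" "bix nb s = j"
      show "L.Ll r s = 0"
      proof (cases "i > j + b0")
        case True thus ?thesis using h L.Ll_band[of s r] by auto
      next
        case False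
        hence "bix nb r < bix nb s" using h by auto
        thus ?thesis using L.Ll_unit[of r s] by auto
      qed
    qed
    show "block_banded nb b0 L.Uu" unfolding block_banded_def B.block_zero_iff
    proof (intro allI impI)
      fix i j r s assume h: "i > j + b0 \<or> j > i + b0" "bix nb r = i" "bix nb s = j"
      show "L.Uu r s = 0"
      proof (cases "i > j + b0")
        case True thus ?thesis using h L.Uu_upper[of s r] by auto
      next
        case False
        thus ?thesis using h L.Uu_band[of r s] by auto
      qed
    qed
    show "bounded_l2 L.Ll" by (rule fbS_bounded[OF L.fbS_Ll])
    show "bounded_l2 L.Uu" by (rule L.bUu)
    show "bounded_l2 L.Linv" by (rule fbS_bounded[OF L.fbS_Linv])
    show "l2_inverse L.Ll L.Linv" unfolding l2_inverse_def using L.Ll_Linv L.Linv_Ll by blast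
    show "bounded_l2 L.Uinv" by (rule L.bUinv)
    show "l2_inverse L.Uu L.Uinv" unfolding l2_inverse_def using L.Uu_Uinv L.Uinv_Uu by blast
    show "bounded_l2 (block_diag_part nb L.Uu)" by (rule fbS_bounded[OF L.fbS_D])
    show "elliptic_l2 (block_diag_part nb L.Uu)" by (rule L.ell_D)
    show "l2_inverse (block_diag_part nb L.Uu) (block_diag_part nb L.Uinv)"
      unfolding l2_inverse_def using L.D_Dinv L.Dinv_D by blast
    show "bounded_l2 (block_diag_part nb L.Uinv)" by (rule fbS_bounded[OF L.fbS_Dinv])
    show "elliptic_l2 (block_diag_part nb L.Uinv)" by (rule L.ell_Dinv)
  qed
qed

end
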